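(* Let $(A,\mathfrak{m})$ be a Cohen–Macaulay local ring of dimension $1$, $L$ a non-free maximal Cohen–Macaulay $A$-module, and $M=\operatorname{Syz}^A_1(L)$. If $x$ is $(A\oplus M\oplus L)$-superficial, then $\mathfrak{m}^{e_0(A)-1}M\subseteq xM$.
   Context: $e_0(A)$ is the multiplicity of $A$. $\operatorname{Syz}^A_1(L)$ is the first syzygy in a minimal free resolution. $x\in\mathfrak{m}$ is superficial for a module $N$ if there is $c>0$ with $(\mathfrak{m}^nN:_Nx)\cap\mathfrak{m}^cN=\mathfrak{m}^{n-1}N$ for all $n>c$. *)

theory Defs
  imports Complex_Main "HOL-Library.Function_Algebras" "HOL-Library.Product_Plus"
          "HOL-Library.Extended_Nat"
begin

text \<open>Commutative algebra over a commutative ring 'a (the whole type is the ring A).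
  A module is a carrier set N inside an abelian group type 'm, with a scalar action
  s :: 'a => 'm => 'm (the module axioms are the library locale module s);
  submodules, spans and (in)dependence are the library notions of HOL.Modules.\<close>

definition ideal :: "'a::comm_ring_1 set \<Rightarrow> bool" where
  "ideal I \<longleftrightarrow> module.subspace ((*)) I"

definition prime_ideal :: "'a::comm_ring_1 set \<Rightarrow> bool" where
  "prime_ideal P \<longleftrightarrow> ideal P \<and> P \<noteq> UNIV \<and> (\<forall>a b. a * b \<in> P \<longrightarrow> a \<in> P \<or> b \<in> P)"

definition noetherian_ring :: "'a::comm_ring_1 itself \<Rightarrow> bool" where
  "noetherian_ring _ \<longleftrightarrow>
     (\<forall>I::'a set. ideal I \<longrightarrow> (\<exists>B. finite B \<and> module.span ((*)) B = I))"

definition local_ring :: "'a::comm_ring_1 set \<Rightarrow> bool" where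
  "local_ring m \<longleftrightarrow> ideal m \<and> m = {x. \<not> x dvd 1}"

definition krull_dim :: "'a::comm_ring_1 itself \<Rightarrow> enat" where
  "krull_dim _ = Sup {enat n | n. \<exists>P :: nat \<Rightarrow> 'a set.
      (\<forall>i\<le>n. prime_ideal (P i)) \<and> (\<forall>i<n. P i \<subset> P (Suc i))}"

fun ideal_pow :: "'a::comm_ring_1 set \<Rightarrow> nat \<Rightarrow> 'a set" where
  "ideal_pow m 0 = UNIV"
| "ideal_pow m (Suc n) = module.span ((*)) {a * b | a b. a \<in> m \<and> b \<in> ideal_pow m n}"

definition ideal_smult :: "('a::comm_ring_1 \<Rightarrow> 'm::ab_group_add \<Rightarrow> 'm) \<Rightarrow> 'a set \<Rightarrow> 'm set \<Rightarrow> 'm set" where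
  "ideal_smult s I N = module.span s {s r v | r v. r \<in> I \<and> v \<in> N}"

definition fin_gen_module :: "('a::comm_ring_1 \<Rightarrow> 'm::ab_group_add \<Rightarrow> 'm) \<Rightarrow> 'm set \<Rightarrow> bool" where
  "fin_gen_module s N \<longleftrightarrow> module.subspace s N \<and> (\<exists>B. finite B \<and> B \<subseteq> N \<and> module.span s B = N)"

definition free_module :: "('a::comm_ring_1 \<Rightarrow> 'm::ab_group_add \<Rightarrow> 'm) \<Rightarrow> 'm set \<Rightarrow> bool" where
  "free_module s N \<longleftrightarrow> (\<exists>B. B \<subseteq> N \<and> \<not> module.dependent s B \<and> module.span s B = N)"

definition regular_seq :: "('a::comm_ring_1 \<Rightarrow> 'm::ab_group_add \<Rightarrow> 'm) \<Rightarrow> 'a set \<Rightarrow> 'm set \<Rightarrow> 'a list \<Rightarrow> bool" where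
  "regular_seq s m N xs \<longleftrightarrow> set xs \<subseteq> m \<and>
     (\<forall>i<length xs. \<forall>v\<in>N. s (xs ! i) v \<in> ideal_smult s (set (take i xs)) N
          \<longrightarrow> v \<in> ideal_smult s (set (take i xs)) N) \<and>
     N \<noteq> ideal_smult s (set xs) N"

definition depth :: "('a::comm_ring_1 \<Rightarrow> 'm::ab_group_add \<Rightarrow> 'm) \<Rightarrow> 'a set \<Rightarrow> 'm set \<Rightarrow> enat" where
  "depth s m N = Sup {enat (length xs) | xs. regular_seq s m N xs}"

definition cohen_macaulay_local :: "'a::comm_ring_1 set \<Rightarrow> bool" where
  "cohen_macaulay_local m \<longleftrightarrow> noetherian_ring TYPE('a) \<and> local_ring m \<and>
     depth ((*)) m (UNIV::'a set) = krull_dim TYPE('a)"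

definition max_CM_module :: "('a::comm_ring_1 \<Rightarrow> 'm::ab_group_add \<Rightarrow> 'm) \<Rightarrow> 'a set \<Rightarrow> 'm set \<Rightarrow> bool" where
  "max_CM_module s m N \<longleftrightarrow> fin_gen_module s N \<and> depth s m N = krull_dim TYPE('a)"

text \<open>Length of N/K: supremum of lengths of strict chains of submodules from K to N.\<close>
definition module_length :: "('a::comm_ring_1 \<Rightarrow> 'm::ab_group_add \<Rightarrow> 'm) \<Rightarrow> 'm set \<Rightarrow> 'm set \<Rightarrow> enat" where
  "module_length s K N = Sup {enat n | n. \<exists>C :: nat \<Rightarrow> 'm set. C 0 = K \<and> C n = N \<and>
      (\<forall>i\<le>n. module.subspace s (C i)) \<and> (\<forall>i<n. C i \<subset> C (Suc i))}"

definition multiplicity :: "'a::comm_ring_1 set \<Rightarrow> nat" where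
  "multiplicity m = (THE e::nat. (\<lambda>n. fact (the_enat (krull_dim TYPE('a)))
       * real (the_enat (module_length ((*)) (ideal_pow m n) (UNIV::'a set)))
       / real n ^ the_enat (krull_dim TYPE('a))) \<longlonglongrightarrow> real e)"

definition superficial :: "('a::comm_ring_1 \<Rightarrow> 'm::ab_group_add \<Rightarrow> 'm) \<Rightarrow> 'a set \<Rightarrow> 'm set \<Rightarrow> 'a \<Rightarrow> bool" where
  "superficial s m N x \<longleftrightarrow> x \<in> m \<and> (\<exists>c>0. \<forall>n>c.
     {v\<in>N. s x v \<in> ideal_smult s (ideal_pow m n) N} \<inter> ideal_smult s (ideal_pow m c) N
       = ideal_smult s (ideal_pow m (n - 1)) N)"

text \<open>Free module A^n realised as functions nat => 'a vanishing outside {..<n}.\<close>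
definition free_scale :: "'a::comm_ring_1 \<Rightarrow> (nat \<Rightarrow> 'a) \<Rightarrow> (nat \<Rightarrow> 'a)" where
  "free_scale r u = (\<lambda>i. r * u i)"

definition free_carrier :: "nat \<Rightarrow> (nat \<Rightarrow> 'a::comm_ring_1) set" where
  "free_carrier n = {u. \<forall>i\<ge>n. u i = 0}"

definition minimal_generators :: "('a::comm_ring_1 \<Rightarrow> 'm::ab_group_add \<Rightarrow> 'm) \<Rightarrow> 'm set \<Rightarrow> (nat \<Rightarrow> 'm) \<Rightarrow> nat \<Rightarrow> bool" where
  "minimal_generators s L g n \<longleftrightarrow> (\<forall>i<n. g i \<in> L) \<and> module.span s (g ` {..<n}) = L \<and>
     (\<forall>k h. (\<forall>i<k. h i \<in> L) \<and> module.span s (h ` {..<k}) = L \<longrightarrow> n \<le> k)"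

text \<open>First syzygy: kernel of the minimal presentation A^n -> L, e_i |-> g_i.\<close>
definition syzygy1 :: "('a::comm_ring_1 \<Rightarrow> 'm::ab_group_add \<Rightarrow> 'm) \<Rightarrow> (nat \<Rightarrow> 'm) \<Rightarrow> nat \<Rightarrow> (nat \<Rightarrow> 'a) set" where
  "syzygy1 s g n = {u \<in> free_carrier n. (\<Sum>i<n. s (u i) (g i)) = 0}"

definition sum3_scale :: "('a::comm_ring_1 \<Rightarrow> 'b \<Rightarrow> 'b) \<Rightarrow> ('a \<Rightarrow> 'c \<Rightarrow> 'c) \<Rightarrow> 'a \<Rightarrow> 'a \<times> 'b \<times> 'c \<Rightarrow> 'a \<times> 'b \<times> 'c" where
  "sum3_scale s1 s2 r p = (r * fst p, s1 r (fst (snd p)), s2 r (snd (snd p)))"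

end

theory Submission
  imports Defs
begin

definition schain :: "('a::comm_ring_1 \<Rightarrow> 'b::ab_group_add \<Rightarrow> 'b) \<Rightarrow> 'b set \<Rightarrow> 'b set \<Rightarrow> nat \<Rightarrow> (nat \<Rightarrow> 'b set) \<Rightarrow> bool" where
 "schain s K N n C \<longleftrightarrow> C 0 = K \<and> C n = N \<and> (\<forall>i\<le>n. module.subspace s (C i)) \<and> (\<forall>i<n. C i \<subset> C (Suc i))"

context module begin

lemma ml_def: "module_length scale K N = Sup {enat n | n. \<exists>C. schain scale K N n C}"
  unfolding module_length_def schain_def by simp

lemma schain_mono: assumes "schain scale K N n C" "i \<le> j" "j \<le> n" shows "C i \<subseteq> C j"
  using assms(2,3)
proof (induction j)
  case 0 then show ?case by simp
next
  case (Suc j)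
  show ?case
  proof (cases "i = Suc j")
    case False
    then have "C i \<subseteq> C j" using Suc by simp
    moreover have "C j \<subset> C (Suc j)" using assms(1) Suc(3) unfolding schain_def by auto
    ultimately show ?thesis by auto
  qed simp
qed

lemma ml_ge: "schain scale K N n C \<Longrightarrow> enat n \<le> module_length scale K N"
  unfolding ml_def by (rule Sup_upper) auto

lemma ml_le: "(\<And>n C. schain scale K N n C \<Longrightarrow> n \<le> k) \<Longrightarrow> module_length scale K N \<le> enat k"
  unfolding ml_def by (rule Sup_least) auto

lemma ml_set_finite:
  assumes "module_length scale K N = enat k"
  shows "finite {n. \<exists>C. schain scale K N n C}"
proof -
  have "\<And>n C. schain scale K N n C \<Longrightarrow> n \<le> k" using ml_ge[of K N] assms by fastforce
  then have "{n. \<exists>C. schain scale K N n C} \<subseteq> {..k}" by auto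
  then show ?thesis using finite_subset by blast
qed


lemma schain_refl: "subspace K \<Longrightarrow> schain scale K K 0 (\<lambda>_. K)"
  unfolding schain_def by auto

lemma schain_exists:
  assumes "subspace P" "subspace N" "P \<subseteq> N"
  shows "\<exists>n C. schain scale P N n C"
proof (cases "P = N")
  case True then show ?thesis using schain_refl assms by blast
next
  case False
  then have "schain scale P N 1 (\<lambda>i. if i = 0 then P else N)"
    using assms unfolding schain_def by auto
  then show ?thesis by blast
qed

lemma ml_attained:
  assumes "module_length scale K N = enat k" "subspace K" "subspace N" "K \<subseteq> N"
  shows "\<exists>C. schain scale K N k C"
proof -
  let ?S = "{n. \<exists>C. schain scale K N n C}"
  have fin: "finite ?S" using ml_set_finite[OF assms(1)] .
  have ne: "?S \<noteq> {}" using schain_exists[OF assms(2-4)] by auto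
  have "module_length scale K N = Sup (enat ` ?S)" unfolding ml_def
    by (rule arg_cong[where f=Sup]) auto
  also have "\<dots> = Max (enat ` ?S)" unfolding Sup_enat_def using fin ne by auto
  also have "\<dots> \<in> enat ` ?S" using fin ne by (intro Max_in) auto
  finally show ?thesis using assms(1) by auto
qed

lemma ml_infinite:
  assumes "module_length scale K N = \<infinity>"
  shows "\<exists>n C. k \<le> n \<and> schain scale K N n C"
proof (rule ccontr)
  assume "\<not> ?thesis"
  then have "n \<le> k" if "schain scale K N n C" for n C using that by (meson nat_le_linear)
  then have "module_length scale K N \<le> enat k" by (rule ml_le)
  then show False using assms by simp
qed

lemma schain_concat:
  assumes "schain scale K P a C1" "schain scale P N b C2"
  shows "schain scale K N (a + b) (\<lambda>i. if i \<le> a then C1 i else C2 (i - a))"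
  unfolding schain_def
proof (intro conjI allI impI)
  fix i assume i: "i < a + b"
  show "(if i \<le> a then C1 i else C2 (i - a)) \<subset> (if Suc i \<le> a then C1 (Suc i) else C2 (Suc i - a))"
  proof (cases "i < a")
    case True then show ?thesis using assms unfolding schain_def by auto
  next
    case False
    then have "i - a < b" "Suc i - a = Suc (i - a)" using i by auto
    moreover have "C1 a = C2 0" using assms unfolding schain_def by auto
    ultimately show ?thesis using assms False unfolding schain_def
      by (cases "i = a") auto
  qed
qed (use assms in \<open>auto simp: schain_def\<close>)

lemma card_Suc_filter:
  "card {i. i < Suc n \<and> P i} = (if P n then Suc (card {i. i < n \<and> P i}) else card {i. i < n \<and> P i})"
proof -
  have e: "{i. i < Suc n \<and> P i} = (if P n then insert n {i. i < n \<and> P i} else {i. i < n \<and> P i})"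
    by (auto simp: less_Suc_eq)
  show ?thesis unfolding e by auto
qed

lemma schain_compress:
  assumes "D 0 = K" "D n = N" "\<forall>i\<le>n. subspace (D i)" "\<forall>i<n. D i \<subseteq> D (Suc i)"
  shows "\<exists>C. schain scale K N (card {i. i < n \<and> D i \<noteq> D (Suc i)}) C"
  using assms
proof (induction n arbitrary: N)
  case 0
  then show ?case using schain_refl[of K] by auto
next
  case (Suc n)
  obtain C where C: "schain scale K (D n) (card {i. i < n \<and> D i \<noteq> D (Suc i)}) C"
    using Suc.IH[of "D n"] Suc.prems by auto
  show ?case
  proof (cases "D n = D (Suc n)")
    case True
    then show ?thesis using C Suc.prems by (auto simp: card_Suc_filter)
  next
    case False
    have "schain scale (D n) (D (Suc n)) 1 (\<lambda>i. if i = 0 then D n else D (Suc n))"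
      using False Suc.prems unfolding schain_def by auto
    from schain_concat[OF C this] False Suc.prems show ?thesis
      by (auto simp: card_Suc_filter)
  qed
qed

lemma enat_all_le_inf: "(\<And>k. enat k \<le> x) \<Longrightarrow> x = \<infinity>"
  by (cases x) (metis Suc_n_not_le_n enat_ord_simps(1), simp)

end

definition sumsp :: "'b::ab_group_add set \<Rightarrow> 'b set \<Rightarrow> 'b set" where
  "sumsp A B = {a + b | a b. a \<in> A \<and> b \<in> B}"

context module begin

lemma subspace_sumsp: assumes "subspace A" "subspace B" shows "subspace (sumsp A B)"
proof (rule subspaceI)
  show "0 \<in> sumsp A B" unfolding sumsp_def using assms subspace_0 by force
next
  fix x y assume "x \<in> sumsp A B" "y \<in> sumsp A B"
  then obtain a b a' b' where "a \<in> A" "b \<in> B" "a' \<in> A" "b' \<in> B" "x = a + b" "y = a' + b'"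
    unfolding sumsp_def by blast
  moreover have "a + b + (a' + b') = (a + a') + (b + b')" by (simp add: algebra_simps)
  ultimately show "x + y \<in> sumsp A B" unfolding sumsp_def using assms subspace_add by blast
next
  fix c x assume "x \<in> sumsp A B"
  then obtain a b where "a \<in> A" "b \<in> B" "x = a + b" unfolding sumsp_def by blast
  then show "c *s x \<in> sumsp A B" unfolding sumsp_def using assms subspace_scale scale_right_distrib by blast
qed

lemma sumsp_absorb: assumes "subspace A" "subspace B" "A \<subseteq> B" shows "sumsp A B = B"
proof
  show "sumsp A B \<subseteq> B" unfolding sumsp_def using assms subspace_add by blast
  show "B \<subseteq> sumsp A B"
  proof
    fix b assume "b \<in> B" then have "b = 0 + b" "0 \<in> A" using assms subspace_0 by auto
    then show "b \<in> sumsp A B" unfolding sumsp_def using \<open>b \<in> B\<close> by blast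
  qed
qed

lemma sumsp_absorb2: assumes "subspace A" "subspace B" "A \<subseteq> B" shows "sumsp B A = B"
proof
  show "sumsp B A \<subseteq> B" unfolding sumsp_def using assms subspace_add by blast
  show "B \<subseteq> sumsp B A"
  proof
    fix b assume "b \<in> B" then have "b = b + 0" "0 \<in> A" using assms subspace_0 by auto
    then show "b \<in> sumsp B A" unfolding sumsp_def using \<open>b \<in> B\<close> by blast
  qed
qed

lemma sumsp_mono: "A \<subseteq> B \<Longrightarrow> sumsp A P \<subseteq> sumsp B P"
  unfolding sumsp_def by auto

lemma modular_eq:
  assumes "subspace A" "subspace B" "subspace P" "A \<subseteq> B" "A \<inter> P = B \<inter> P" "sumsp A P = sumsp B P"
  shows "A = B"
proof
  show "B \<subseteq> A"
  proof
    fix z assume z: "z \<in> B"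
    have "z = z + 0" "0 \<in> P" using assms(3) subspace_0 by auto
    then have "z \<in> sumsp B P" using z unfolding sumsp_def by blast
    then have "z \<in> sumsp A P" using assms(6) by simp
    then obtain a p where ap: "a \<in> A" "p \<in> P" "z = a + p" unfolding sumsp_def by blast
    have "p = z - a" using ap by simp
    then have "p \<in> B" using z ap assms(2,4) by (metis in_mono subspace_diff)
    then have "p \<in> A" using ap assms(5) by auto
    then show "z \<in> A" using ap assms(1) subspace_add by auto
  qed
qed (use assms in auto)

lemma ml_add_le:
  assumes sK: "subspace K" and sP: "subspace P" and sN: "subspace N"
    and KP: "K \<subseteq> P" and PN: "P \<subseteq> N"
    and a: "module_length scale K P = enat a" and b: "module_length scale P N = enat b"
    and C: "schain scale K N n C"
  shows "n \<le> a + b"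
proof -
  define D1 where "D1 i = C i \<inter> P" for i
  define D2 where "D2 i = sumsp (C i) P" for i
  have Csub: "\<forall>i\<le>n. subspace (C i)" and C0: "C 0 = K" and Cn: "C n = N"
    and Cstep: "\<forall>i<n. C i \<subset> C (Suc i)"
    using C unfolding schain_def by auto
  let ?T1 = "{i. i < n \<and> D1 i \<noteq> D1 (Suc i)}"
  let ?T2 = "{i. i < n \<and> D2 i \<noteq> D2 (Suc i)}"
  have "D1 0 = K" "D1 n = P" using C0 Cn KP PN unfolding D1_def by blast+
  moreover have "\<forall>i\<le>n. subspace (D1 i)" using Csub sP unfolding D1_def by (auto intro!: subspace_inter)
  moreover have "\<forall>i<n. D1 i \<subseteq> D1 (Suc i)" using Cstep unfolding D1_def by auto
  ultimately obtain C1 where "schain scale K P (card ?T1) C1"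
    using schain_compress[of D1 K n P] by blast
  then have "enat (card ?T1) \<le> enat a" using ml_ge a by metis
  then have t1: "card ?T1 \<le> a" by simp
  have "D2 0 = P" unfolding D2_def C0 by (rule sumsp_absorb[OF sK sP KP])
  moreover have "D2 n = N" unfolding D2_def Cn by (rule sumsp_absorb2[OF sP sN PN])
  moreover have "\<forall>i\<le>n. subspace (D2 i)" using Csub sP unfolding D2_def by (auto intro!: subspace_sumsp)
  moreover have "\<forall>i<n. D2 i \<subseteq> D2 (Suc i)" using Cstep unfolding D2_def by (auto intro!: sumsp_mono)
  ultimately obtain C2 where "schain scale P N (card ?T2) C2"
    using schain_compress[of D2 P n N] by blast
  then have "enat (card ?T2) \<le> enat b" using ml_ge b by metis
  then have t2: "card ?T2 \<le> b" by simp
  have "{..<n} \<subseteq> ?T1 \<union> ?T2"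
  proof
    fix i assume i: "i \<in> {..<n}"
    show "i \<in> ?T1 \<union> ?T2"
    proof (rule ccontr)
      assume "i \<notin> ?T1 \<union> ?T2"
      then have "D1 i = D1 (Suc i)" "D2 i = D2 (Suc i)" using i by auto
      then have e1: "C i \<inter> P = C (Suc i) \<inter> P" and e2: "sumsp (C i) P = sumsp (C (Suc i)) P"
        unfolding D1_def D2_def by simp_all
      have "subspace (C i)" "subspace (C (Suc i))" "C i \<subseteq> C (Suc i)" using Csub Cstep i by auto
      then have "C i = C (Suc i)" using modular_eq[OF _ _ sP _ e1 e2] by blast
      then show False using Cstep i by auto
    qed
  qed
  moreover have "finite (?T1 \<union> ?T2)" by auto
  ultimately have "card {..<n} \<le> card (?T1 \<union> ?T2)" by (rule card_mono[rotated])
  then have "n \<le> card (?T1 \<union> ?T2)" by simp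
  also have "\<dots> \<le> card ?T1 + card ?T2" by (rule card_Un_le)
  finally have "n \<le> card ?T1 + card ?T2" .
  then show ?thesis using order_trans add_mono[OF t1 t2] by blast
qed

lemma ml_add:
  assumes sK: "subspace K" and sP: "subspace P" and sN: "subspace N"
    and KP: "K \<subseteq> P" and PN: "P \<subseteq> N"
  shows "module_length scale K N = module_length scale K P + module_length scale P N"
proof (cases "module_length scale K P")
  case (enat a)
  note a = this
  show ?thesis
  proof (cases "module_length scale P N")
    case (enat b)
    obtain C1 where C1: "schain scale K P a C1" using ml_attained[OF a sK sP KP] by blast
    obtain C2 where C2: "schain scale P N b C2" using ml_attained[OF enat sP sN PN] by blast
    have "enat (a + b) \<le> module_length scale K N" using ml_ge[OF schain_concat[OF C1 C2]] .
    moreover have "module_length scale K N \<le> enat (a + b)"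
      by (rule ml_le) (rule ml_add_le[OF assms a enat])
    ultimately show ?thesis using a enat by simp
  next
    case infinity
    have "enat k \<le> module_length scale K N" for k
    proof -
      obtain n C where n: "k \<le> n" and C: "schain scale P N n C" using ml_infinite[OF infinity] by blast
      obtain a' C1 where C1: "schain scale K P a' C1" using schain_exists[OF sK sP KP] by blast
      have "enat (a' + n) \<le> module_length scale K N" using ml_ge[OF schain_concat[OF C1 C]] .
      moreover have "enat k \<le> enat (a' + n)" using n by simp
      ultimately show ?thesis by (rule order_trans[rotated])
    qed
    then show ?thesis using infinity enat_all_le_inf by auto
  qed
next
  case infinity
  have "enat k \<le> module_length scale K N" for k
  proof -
    obtain n C where n: "k \<le> n" and C: "schain scale K P n C" using ml_infinite[OF infinity] by blast
    obtain a' C1 where C1: "schain scale P N a' C1" using schain_exists[OF sP sN PN] by blast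
    have "enat (n + a') \<le> module_length scale K N" using ml_ge[OF schain_concat[OF C C1]] .
    moreover have "enat k \<le> enat (n + a')" using n by simp
    ultimately show ?thesis by (rule order_trans[rotated])
  qed
  then show ?thesis using infinity enat_all_le_inf by auto
qed

lemma ml_le1:
  assumes "\<And>Q. subspace Q \<Longrightarrow> P \<subseteq> Q \<Longrightarrow> Q \<subseteq> N \<Longrightarrow> Q = P \<or> Q = N"
  shows "module_length scale P N \<le> 1"
proof -
  have "n \<le> 1" if C: "schain scale P N n C" for n C
  proof (rule ccontr)
    assume "\<not> n \<le> 1"
    then have n2: "2 \<le> n" by simp
    have "\<forall>i<n. C i \<subset> C (Suc i)" using C unfolding schain_def by blast
    then have "C 0 \<subset> C 1" "C 1 \<subset> C 2" using n2 by (auto simp: numeral_2_eq_2)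
    moreover have "C 2 \<subseteq> C n" using schain_mono[OF C n2 order_refl] .
    moreover have "subspace (C 1)" "C 0 = P" "C n = N" using C n2 unfolding schain_def by auto
    ultimately show False using assms[of "C 1"] by auto
  qed
  then have "module_length scale P N \<le> enat 1" by (rule ml_le)
  then show ?thesis by (simp add: one_enat_def)
qed

lemma ml_refl: "module_length scale K K = 0"
proof -
  have "n \<le> 0" if C: "schain scale K K n C" for n C
  proof (rule ccontr)
    assume "\<not> n \<le> 0"
    then have "C 0 \<subset> C 1" "C 1 \<subseteq> C n" using C schain_mono[OF C, of 1 n] unfolding schain_def by auto
    then show False using C unfolding schain_def by auto
  qed
  then have "module_length scale K K \<le> enat 0" by (rule ml_le)
  then show ?thesis by (simp add: zero_enat_def[symmetric])
qed

lemma ml_iso: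
  assumes sub: "\<And>Q. subspace Q \<Longrightarrow> K \<subseteq> Q \<Longrightarrow> Q \<subseteq> N \<Longrightarrow> subspace (f Q)"
    and strict: "\<And>Q1 Q2. subspace Q1 \<Longrightarrow> subspace Q2 \<Longrightarrow> K \<subseteq> Q1 \<Longrightarrow> Q2 \<subseteq> N \<Longrightarrow> Q1 \<subset> Q2 \<Longrightarrow> f Q1 \<subset> f Q2"
    and fK: "f K = K'" and fN: "f N = N'"
  shows "module_length scale K N \<le> module_length scale K' N'"
  unfolding ml_def[of K N]
proof (rule Sup_least)
  fix y assume "y \<in> {enat n |n. \<exists>C. schain scale K N n C}"
  then obtain n C where y: "y = enat n" and C: "schain scale K N n C" by auto
  have int: "K \<subseteq> C i \<and> C i \<subseteq> N" if "i \<le> n" for i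
    using schain_mono[OF C, of 0 i] schain_mono[OF C, of i n] that C unfolding schain_def by auto
  have "schain scale K' N' n (\<lambda>i. f (C i))"
    unfolding schain_def
  proof (intro conjI allI impI)
    show "f (C 0) = K'" using C fK unfolding schain_def by simp
    show "f (C n) = N'" using C fN unfolding schain_def by simp
    fix i
    show "subspace (f (C i))" if "i \<le> n" using sub[of "C i"] int[OF that] C that unfolding schain_def by auto
    show "f (C i) \<subset> f (C (Suc i))" if "i < n"
      using strict[of "C i" "C (Suc i)"] int[of i] int[of "Suc i"] C that unfolding schain_def by auto
  qed
  then show "y \<le> module_length scale K' N'" using y ml_ge by simp
qed

end

global_interpretation R: module "(*) :: 'a::comm_ring_1 \<Rightarrow> 'a \<Rightarrow> 'a"
  by standard (auto simp: algebra_simps)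

declare R.scale_scale[simp del]

definition pr :: "'a::comm_ring_1 \<Rightarrow> 'a set" where "pr x = range (\<lambda>r. x * r)"

definition iprod :: "'a::comm_ring_1 set \<Rightarrow> 'a set \<Rightarrow> 'a set" where
  "iprod I J = R.span {a * b | a b. a \<in> I \<and> b \<in> J}"

lemma ideal_R: "ideal I = R.subspace I" by (simp add: ideal_def)

lemma ideal_0: "ideal I \<Longrightarrow> 0 \<in> I" by (simp add: ideal_R R.subspace_0)
lemma ideal_add: "ideal I \<Longrightarrow> a \<in> I \<Longrightarrow> b \<in> I \<Longrightarrow> a + b \<in> I" by (simp add: ideal_R R.subspace_add)
lemma ideal_diff: "ideal I \<Longrightarrow> a \<in> I \<Longrightarrow> b \<in> I \<Longrightarrow> a - b \<in> I" by (simp add: ideal_R R.subspace_diff)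
lemma ideal_multL: "ideal I \<Longrightarrow> a \<in> I \<Longrightarrow> r * a \<in> I" by (simp add: ideal_R R.subspace_scale)
lemma ideal_multR: "ideal I \<Longrightarrow> a \<in> I \<Longrightarrow> a * r \<in> I" using ideal_multL[of I a r] by (simp add: mult.commute)
lemma ideal_UNIV: "ideal UNIV" by (simp add: ideal_R)
lemma ideal_span: "ideal (R.span S)" by (simp add: ideal_R)

lemma ideal_pow_Suc': "ideal_pow m (Suc n) = iprod m (ideal_pow m n)"
  by (simp add: iprod_def)

lemma ideal_iprod: "ideal (iprod I J)" by (simp add: iprod_def ideal_span)

lemma iprod_gen: "a \<in> I \<Longrightarrow> b \<in> J \<Longrightarrow> a * b \<in> iprod I J"
  unfolding iprod_def by (rule R.span_base) blast

lemma iprod_sub_right: assumes "ideal J" shows "iprod I J \<subseteq> J"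
  unfolding iprod_def using assms by (intro R.span_minimal) (auto simp: ideal_R[symmetric] intro: ideal_multL)

lemma iprod_sub_left: assumes "ideal I" shows "iprod I J \<subseteq> I"
  unfolding iprod_def using assms by (intro R.span_minimal) (auto simp: ideal_R[symmetric] intro: ideal_multR)

lemma iprod_mono: "I \<subseteq> I' \<Longrightarrow> J \<subseteq> J' \<Longrightarrow> iprod I J \<subseteq> iprod I' J'"
  unfolding iprod_def by (intro R.span_mono) blast

lemma iprod_minimal: assumes "ideal K" "\<And>a b. a \<in> I \<Longrightarrow> b \<in> J \<Longrightarrow> a * b \<in> K" shows "iprod I J \<subseteq> K"
  unfolding iprod_def using assms by (intro R.span_minimal) (auto simp: ideal_R[symmetric])

lemma iprod_assoc_sub: "iprod I (iprod J K) \<subseteq> iprod (iprod I J) K"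
proof (rule iprod_minimal[OF ideal_iprod])
  fix a z assume a: "a \<in> I" and z: "z \<in> iprod J K"
  have "R.subspace {w. a * w \<in> iprod (iprod I J) K}"
  proof (rule R.subspaceI)
    show "0 \<in> {w. a * w \<in> iprod (iprod I J) K}" using ideal_0[OF ideal_iprod] by simp
    show "u + v \<in> {w. a * w \<in> iprod (iprod I J) K}" if "u \<in> {w. a * w \<in> iprod (iprod I J) K}" "v \<in> {w. a * w \<in> iprod (iprod I J) K}" for u v
      using that ideal_add[OF ideal_iprod] by (simp add: distrib_left)
    show "c * u \<in> {w. a * w \<in> iprod (iprod I J) K}" if "u \<in> {w. a * w \<in> iprod (iprod I J) K}" for c u
    proof -
      have "c * (a * u) \<in> iprod (iprod I J) K" by (rule ideal_multL[OF ideal_iprod]) (use that in simp)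
      then show ?thesis by (simp add: mult.left_commute)
    qed
  qed
  note sub = this
  have gen: "a * (b * c) \<in> iprod (iprod I J) K" if "b \<in> J" "c \<in> K" for b c
    using iprod_gen[OF iprod_gen[OF a that(1)] that(2)] unfolding mult.assoc .
  have "z \<in> R.span {b * c | b c. b \<in> J \<and> c \<in> K}" using z unfolding iprod_def .
  then have "z \<in> {w. a * w \<in> iprod (iprod I J) K}"
  proof (rule R.span_subspace_induct[OF _ sub])
    fix w assume "w \<in> {b * c | b c. b \<in> J \<and> c \<in> K}"
    then obtain b c where "w = b * c" "b \<in> J" "c \<in> K" by blast
    then show "w \<in> {w. a * w \<in> iprod (iprod I J) K}" using gen by simp
  qed
  then show "a * z \<in> iprod (iprod I J) K" by simp
qed

declare ideal_pow.simps(2)[simp del]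

lemma ideal_pow_ideal: "ideal (ideal_pow m n)"
  by (cases n) (simp_all add: ideal_UNIV ideal_span ideal_pow.simps(2))

lemma ideal_pow_dec: "ideal_pow m (Suc n) \<subseteq> ideal_pow m n"
  unfolding ideal_pow_Suc' by (rule iprod_sub_right[OF ideal_pow_ideal])

lemma ideal_pow_anti: "k \<le> n \<Longrightarrow> ideal_pow m n \<subseteq> ideal_pow m k"
  by (induction n rule: dec_induct) (use ideal_pow_dec in blast)+

lemma ideal_pow_mult: "a \<in> m \<Longrightarrow> b \<in> ideal_pow m n \<Longrightarrow> a * b \<in> ideal_pow m (Suc n)"
  unfolding ideal_pow_Suc' by (rule iprod_gen)

lemma ideal_pow_power: "y \<in> m \<Longrightarrow> y ^ c \<in> ideal_pow m c"
  by (induction c) (auto intro: ideal_pow_mult)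

lemma ideal_pow_add: "ideal_pow m (a + b) \<subseteq> iprod (ideal_pow m a) (ideal_pow m b)"
proof (induction a)
  case 0
  show ?case
  proof
    fix z assume "z \<in> ideal_pow m (0 + b)"
    then have "1 * z \<in> iprod (ideal_pow m 0) (ideal_pow m b)" by (intro iprod_gen) auto
    then show "z \<in> iprod (ideal_pow m 0) (ideal_pow m b)" by simp
  qed
next
  case (Suc a)
  have "ideal_pow m (Suc a + b) = iprod m (ideal_pow m (a + b))" by (simp add: ideal_pow_Suc')
  also have "\<dots> \<subseteq> iprod m (iprod (ideal_pow m a) (ideal_pow m b))" by (rule iprod_mono[OF order_refl Suc.IH])
  also have "\<dots> \<subseteq> iprod (iprod m (ideal_pow m a)) (ideal_pow m b)" by (rule iprod_assoc_sub)
  also have "\<dots> = iprod (ideal_pow m (Suc a)) (ideal_pow m b)" by (simp add: ideal_pow_Suc')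
  finally show ?case .
qed

lemma ideal_pr: "ideal (pr x)"
  unfolding ideal_R
proof (rule R.subspaceI)
  show "0 \<in> pr x" unfolding pr_def by (rule range_eqI[of _ _ 0]) simp
  show "a + b \<in> pr x" if ab: "a \<in> pr x" "b \<in> pr x" for a b
  proof -
    obtain r t where "a = x * r" "b = x * t" using ab unfolding pr_def by auto
    then have "a + b = x * (r + t)" by (simp add: distrib_left)
    then show ?thesis unfolding pr_def by blast
  qed
  show "c * a \<in> pr x" if a: "a \<in> pr x" for a c
  proof -
    obtain r where "a = x * r" using a unfolding pr_def by auto
    then have "c * a = x * (c * r)" by (simp add: mult.left_commute)
    then show ?thesis unfolding pr_def by blast
  qed
qed

lemma pr_mem: "x * r \<in> pr x" unfolding pr_def by auto

lemma ideal_image: assumes "ideal J" shows "ideal ((*) x ` J)"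
  unfolding ideal_R
proof (rule R.subspaceI)
  show "0 \<in> (*) x ` J" using ideal_0[OF assms] by (metis image_eqI mult_zero_right)
  show "a + b \<in> (*) x ` J" if "a \<in> (*) x ` J" "b \<in> (*) x ` J" for a b
    using that ideal_add[OF assms] by (auto simp: distrib_left[symmetric])
  show "c * a \<in> (*) x ` J" if a: "a \<in> (*) x ` J" for a c
  proof -
    obtain j where j: "j \<in> J" "a = x * j" using a by auto
    then have "c * a = x * (c * j)" by (simp add: mult.left_commute)
    then show ?thesis using ideal_multL[OF assms j(1)] by blast
  qed
qed

lemma iprod_pr: assumes "ideal J" shows "iprod (pr x) J \<subseteq> (*) x ` J"
proof (rule iprod_minimal[OF ideal_image[OF assms]])
  fix a b assume a: "a \<in> pr x" and b: "b \<in> J"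
  from a obtain r where r: "a = x * r" unfolding pr_def by blast
  have "a * b = x * (r * b)" unfolding r by (rule mult.assoc)
  then show "a * b \<in> (*) x ` J" using ideal_multL[OF assms b, of r] by blast
qed

lemma pow_shift: assumes "ideal_pow m s \<subseteq> pr x" shows "ideal_pow m (s + t) \<subseteq> (*) x ` ideal_pow m t"
proof -
  have "ideal_pow m (s + t) \<subseteq> iprod (ideal_pow m s) (ideal_pow m t)" by (rule ideal_pow_add)
  also have "\<dots> \<subseteq> iprod (pr x) (ideal_pow m t)" by (rule iprod_mono[OF assms order_refl])
  also have "\<dots> \<subseteq> (*) x ` ideal_pow m t" by (rule iprod_pr[OF ideal_pow_ideal])
  finally show ?thesis .
qed

lemma pow_mult_pr: assumes "ideal_pow m s \<subseteq> pr x" shows "ideal_pow m (s * k) \<subseteq> pr (x ^ k)"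
proof (induction k)
  case 0
  have "z \<in> pr (x ^ 0)" for z using pr_mem[of 1 z] by simp
  then show ?case by blast
next
  case (Suc k)
  have "ideal_pow m (s * Suc k) = ideal_pow m (s + s * k)" by simp
  also have "\<dots> \<subseteq> (*) x ` ideal_pow m (s * k)" by (rule pow_shift[OF assms])
  also have "\<dots> \<subseteq> (*) x ` pr (x ^ k)" using Suc.IH by blast
  also have "\<dots> \<subseteq> pr (x ^ Suc k)"
  proof
    fix z assume "z \<in> (*) x ` pr (x ^ k)"
    then obtain w where w: "w \<in> pr (x ^ k)" "z = x * w" by blast
    from w(1) obtain r where r: "w = x ^ k * r" unfolding pr_def by blast
    have "z = x ^ Suc k * r" unfolding w(2) r power_Suc mult.assoc ..
    then show "z \<in> pr (x ^ Suc k)" using pr_mem by metis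
  qed
  finally show ?case .
qed

lemma sumsp_memI: "u \<in> A \<Longrightarrow> v \<in> B \<Longrightarrow> u + v \<in> sumsp A B"
  unfolding sumsp_def by blast

lemma ideal_sumsp: "ideal A \<Longrightarrow> ideal B \<Longrightarrow> ideal (sumsp A B)"
  unfolding ideal_R by (rule R.subspace_sumsp)

lemma sumsp_left: "ideal B \<Longrightarrow> u \<in> A \<Longrightarrow> u \<in> sumsp A B"
  using sumsp_memI[of u A 0 B] ideal_0 by auto

lemma sumsp_right: "ideal A \<Longrightarrow> v \<in> B \<Longrightarrow> v \<in> sumsp A B"
  using sumsp_memI[of 0 A v B] ideal_0 by auto

lemma local_ideal: "local_ring m \<Longrightarrow> ideal m" unfolding local_ring_def by blast

lemma local_mem: "local_ring m \<Longrightarrow> a \<in> m \<longleftrightarrow> \<not> a dvd 1" by (auto simp: local_ring_def)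

lemma one_notin: "local_ring m \<Longrightarrow> 1 \<notin> m" by (simp add: local_mem)

lemma ideal_one: "ideal J \<Longrightarrow> 1 \<in> J \<Longrightarrow> J = UNIV"
  using ideal_multL[of J 1] by auto

lemma proper_sub_m:
  assumes "local_ring m" "ideal J" "J \<noteq> UNIV" shows "J \<subseteq> m"
proof
  fix j assume j: "j \<in> J"
  show "j \<in> m"
  proof (rule ccontr)
    assume "j \<notin> m"
    then obtain u where "1 = j * u" using assms(1) local_mem by (metis dvdE)
    then have "1 \<in> J" using ideal_multR[OF assms(2) j, of u] by simp
    then show False using ideal_one assms by blast
  qed
qed

lemma unit_mult: "(a::'a::comm_ring_1) dvd 1 \<Longrightarrow> b dvd 1 \<Longrightarrow> a * b dvd 1"
  by (metis dvd_mult_left dvd_mult_right dvd_trans mult_dvd_mono mult_1_right)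

lemma prime_m: assumes "local_ring m" shows "prime_ideal m"
  unfolding prime_ideal_def
proof (intro conjI allI impI)
  show "ideal m" using assms by (rule local_ideal)
  show "m \<noteq> UNIV" using one_notin[OF assms] by auto
  fix a b assume "a * b \<in> m"
  then show "a \<in> m \<or> b \<in> m" using unit_mult local_mem[OF assms] by metis
qed

lemma prime_not_one: "prime_ideal P \<Longrightarrow> 1 \<notin> P"
  unfolding prime_ideal_def using ideal_one by blast

lemma exists_prime_avoiding:
  fixes I :: "'a::comm_ring_1 set"
  assumes I: "ideal I" and S1: "1 \<in> S" and Smult: "\<And>a b. a \<in> S \<Longrightarrow> b \<in> S \<Longrightarrow> a * b \<in> S"
    and disj: "I \<inter> S = {}"
  shows "\<exists>P. prime_ideal P \<and> I \<subseteq> P \<and> P \<inter> S = {}"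
proof -
  define F where "F = {J. ideal J \<and> I \<subseteq> J \<and> J \<inter> S = {}}"
  have "\<forall>C\<in>chains F. \<exists>U\<in>F. \<forall>X\<in>C. X \<subseteq> U"
  proof
    fix C assume C: "C \<in> chains F"
    show "\<exists>U\<in>F. \<forall>X\<in>C. X \<subseteq> U"
    proof (cases "C = {}")
      case True then show ?thesis using I disj unfolding F_def by auto
    next
      case False
      have CF: "C \<subseteq> F" and ch: "\<And>X Y. X \<in> C \<Longrightarrow> Y \<in> C \<Longrightarrow> X \<subseteq> Y \<or> Y \<subseteq> X"
        using C unfolding chains_def chain_subset_def by auto
      have "ideal (\<Union>C)" unfolding ideal_R
      proof (rule R.subspaceI)
        obtain X where "X \<in> C" using False by auto
        then show "0 \<in> \<Union>C" using CF ideal_0 unfolding F_def by blast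
        fix a b c assume a: "a \<in> \<Union>C"
        then obtain X where X: "X \<in> C" "a \<in> X" by auto
        then show "c * a \<in> \<Union>C" using CF ideal_multL unfolding F_def by blast
        assume "b \<in> \<Union>C"
        then obtain Y where Y: "Y \<in> C" "b \<in> Y" by auto
        show "a + b \<in> \<Union>C"
        proof (cases "X \<subseteq> Y")
          case True
          then show ?thesis using X Y CF ideal_add unfolding F_def by blast
        next
          case False
          then have "Y \<subseteq> X" using ch X Y by blast
          then show ?thesis using X Y CF ideal_add unfolding F_def by blast
        qed
      qed
      moreover have "I \<subseteq> \<Union>C" "\<Union>C \<inter> S = {}" using CF False unfolding F_def by auto
      ultimately show ?thesis unfolding F_def by auto
    qed
  qed
  from Zorn_Lemma2[OF this] obtain M where M: "M \<in> F" and max0: "\<forall>X\<in>F. M \<subseteq> X \<longrightarrow> X = M"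
    by blast
  have max: "\<And>X. X \<in> F \<Longrightarrow> M \<subseteq> X \<Longrightarrow> X = M" using max0 by blast
  have Mi: "ideal M" "I \<subseteq> M" "M \<inter> S = {}" using M unfolding F_def by auto
  have meet: "\<exists>p r. p \<in> M \<and> p + a * r \<in> S" if a: "a \<notin> M" for a
  proof (rule ccontr)
    assume nm: "\<not> ?thesis"
    define Ma where "Ma = sumsp M (pr a)"
    have "ideal Ma" unfolding Ma_def by (rule ideal_sumsp[OF Mi(1) ideal_pr])
    moreover have "M \<subseteq> Ma" unfolding Ma_def using sumsp_left[OF ideal_pr] by blast
    moreover have "Ma \<inter> S = {}"
    proof -
      have "z \<notin> S" if "z \<in> Ma" for z
      proof -
        from that obtain p w where "p \<in> M" "w \<in> pr a" "z = p + w" unfolding Ma_def sumsp_def by blast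
        moreover from \<open>w \<in> pr a\<close> obtain r where "w = a * r" unfolding pr_def by blast
        ultimately show ?thesis using nm by blast
      qed
      then show ?thesis by blast
    qed
    ultimately have "Ma \<in> F" using Mi unfolding F_def by auto
    then have "Ma = M" using max \<open>M \<subseteq> Ma\<close> by blast
    moreover have "a \<in> Ma" unfolding Ma_def using sumsp_right[OF Mi(1), of a "pr a"] pr_mem[of a 1] by simp
    ultimately show False using a by simp
  qed
  have "prime_ideal M"
    unfolding prime_ideal_def
  proof (intro conjI allI impI)
    show "ideal M" by (rule Mi(1))
    show "M \<noteq> UNIV" using Mi(3) S1 by auto
    fix a b assume ab: "a * b \<in> M"
    show "a \<in> M \<or> b \<in> M"
    proof (rule ccontr)
      assume "\<not> ?thesis"
      then have "a \<notin> M" "b \<notin> M" by auto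
      from meet[OF this(1)] obtain p r where pr1: "p \<in> M" "p + a * r \<in> S" by blast
      from meet[OF \<open>b \<notin> M\<close>] obtain q t where pr2: "q \<in> M" "q + b * t \<in> S" by blast
      have "(p + a * r) * (q + b * t) = p * (q + b * t) + (a * r) * q + (a * b) * (r * t)"
        by (simp add: algebra_simps)
      also have "\<dots> \<in> M"
      proof -
        have "p * (q + b * t) \<in> M" by (rule ideal_multR[OF Mi(1) pr1(1)])
        moreover have "(a * r) * q \<in> M" by (rule ideal_multL[OF Mi(1) pr2(1)])
        moreover have "(a * b) * (r * t) \<in> M" by (rule ideal_multR[OF Mi(1) ab])
        ultimately show ?thesis using ideal_add[OF Mi(1)] by blast
      qed
      finally show False using Smult[OF pr1(2) pr2(2)] Mi(3) by blast
    qed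
  qed
  then show ?thesis using Mi by blast
qed

lemma dim_ge2:
  fixes P Q N :: "'a::comm_ring_1 set"
  assumes "prime_ideal P" "prime_ideal Q" "prime_ideal N" "P \<subset> Q" "Q \<subset> N"
  shows "enat 2 \<le> krull_dim TYPE('a)"
  unfolding krull_dim_def
proof (rule Sup_upper)
  define C where "C i = (if i = 0 then P else if i = 1 then Q else N)" for i :: nat
  have "(\<forall>i\<le>2. prime_ideal (C i)) \<and> (\<forall>i<2. C i \<subset> C (Suc i))"
    using assms unfolding C_def by (auto simp: less_2_cases_iff)
  then show "enat 2 \<in> {enat n |n. \<exists>P :: nat \<Rightarrow> 'a set. (\<forall>i\<le>n. prime_ideal (P i)) \<and> (\<forall>i<n. P i \<subset> P (Suc i))}"
    by blast
qed

lemma reg_pow: assumes "\<forall>v. z * v = 0 \<longrightarrow> v = 0" shows "z ^ k * v = 0 \<Longrightarrow> v = (0::'a::comm_ring_1)"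
proof (induction k arbitrary: v)
  case 0 then show ?case by simp
next
  case (Suc k)
  then have "z * (z ^ k * v) = 0" by (simp add: mult.assoc)
  then have "z ^ k * v = 0" using assms by blast
  then show ?case using Suc.IH by blast
qed

lemma rad_m:
  fixes m :: "'a::comm_ring_1 set"
  assumes loc: "local_ring m" and dim: "krull_dim TYPE('a) = 1" and z: "z \<in> m"
    and reg: "\<forall>v. z * v = 0 \<longrightarrow> v = 0" and a: "a \<in> m"
  shows "\<exists>k. a ^ k \<in> pr z"
proof (rule ccontr)
  assume nk: "\<not> ?thesis"
  have "pr z \<inter> range (\<lambda>k. a ^ k) = {}" using nk by auto
  moreover have "a ^ i * a ^ j \<in> range (\<lambda>k. a ^ k)" for i j by (metis power_add rangeI)
  moreover have "1 \<in> range (\<lambda>k. a ^ k)" by (rule range_eqI[of _ _ 0]) simp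
  moreover have "u * w \<in> range (\<lambda>k. a ^ k)" if uw: "u \<in> range (\<lambda>k. a ^ k)" "w \<in> range (\<lambda>k. a ^ k)" for u w
  proof -
    obtain i j where "u = a ^ i" "w = a ^ j" using uw by blast
    then have "u * w = a ^ (i + j)" by (simp add: power_add)
    then show ?thesis by blast
  qed
  ultimately obtain Q where Q: "prime_ideal Q" "pr z \<subseteq> Q" "Q \<inter> range (\<lambda>k. a ^ k) = {}"
    using exists_prime_avoiding[OF ideal_pr, of "range (\<lambda>k. a ^ k)" z] by blast
  have aQ: "a \<notin> Q" using Q(3) by (metis disjoint_iff power_one_right rangeI)
  have zQ: "z \<in> Q" using Q(2) pr_mem[of z 1] by auto
  have Qm: "Q \<subset> m"
  proof -
    have "Q \<subseteq> m" using proper_sub_m[OF loc] Q(1) unfolding prime_ideal_def by blast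
    then show ?thesis using a aQ by blast
  qed
  define S2 where "S2 = {t * z ^ k | t k. t \<notin> Q}"
  have S21: "1 \<in> S2"
  proof -
    have "1 = 1 * z ^ 0" by simp
    then show ?thesis unfolding S2_def using prime_not_one[OF Q(1)] by blast
  qed
  have S2m: "u * w \<in> S2" if "u \<in> S2" "w \<in> S2" for u w
  proof -
    from that(1) obtain t k where "u = t * z ^ k" "t \<notin> Q" unfolding S2_def by blast
    moreover from that(2) obtain t' k' where "w = t' * z ^ k'" "t' \<notin> Q" unfolding S2_def by blast
    moreover have "t * t' \<notin> Q" using Q(1) \<open>t \<notin> Q\<close> \<open>t' \<notin> Q\<close> unfolding prime_ideal_def by blast
    moreover have "t * z ^ k * (t' * z ^ k') = (t * t') * z ^ (k + k')" by (simp add: power_add algebra_simps)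
    ultimately show ?thesis unfolding S2_def by blast
  qed
  have "{0} \<inter> S2 = {}"
  proof -
    have "t * z ^ k \<noteq> 0" if "t \<notin> Q" for t k
    proof
      assume "t * z ^ k = 0"
      then have "t = 0" using reg_pow[OF reg, of k t] by (simp add: mult.commute)
      then show False using that ideal_0 Q(1) unfolding prime_ideal_def by blast
    qed
    then show ?thesis unfolding S2_def by force
  qed
  then obtain P where P: "prime_ideal P" "P \<inter> S2 = {}"
    using exists_prime_avoiding[of "{0}" S2] S21 S2m by (auto simp: ideal_R)
  have PQ: "P \<subseteq> Q"
  proof
    fix t assume "t \<in> P"
    show "t \<in> Q"
    proof (rule ccontr)
      assume "t \<notin> Q"
      then have "t * z ^ 0 \<in> S2" unfolding S2_def by blast
      then show False using P(2) \<open>t \<in> P\<close> by auto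
    qed
  qed
  have "z \<notin> P"
  proof
    assume "z \<in> P"
    have "1 * z ^ 1 \<in> S2" unfolding S2_def using prime_not_one[OF Q(1)] by blast
    then show False using P(2) \<open>z \<in> P\<close> by auto
  qed
  then have "P \<subset> Q" using PQ zQ by blast
  then have "enat 2 \<le> krull_dim TYPE('a)" using dim_ge2[OF P(1) Q(1) prime_m[OF loc] _ Qm] by blast
  then show False using dim by (simp add: one_enat_def)
qed


lemma pr_one: "pr 1 = UNIV" unfolding pr_def by auto

lemma sumsp_UNIV_left: "ideal B \<Longrightarrow> sumsp UNIV B = UNIV"
  using sumsp_left[of B _ UNIV] by auto

lemma sumsp_UNIV_right: "ideal A \<Longrightarrow> sumsp A UNIV = UNIV"
  using sumsp_right[of A _ UNIV] by auto

lemma pow_insert: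
  fixes a :: "'a::comm_ring_1"
  shows "ideal_pow (R.span (insert a B)) (p + k) \<subseteq> sumsp (ideal_pow (R.span B) p) (pr (a ^ k))"
proof (induction p arbitrary: k)
  case 0
  have "ideal_pow (R.span B) 0 = UNIV" by simp
  then show ?case using sumsp_UNIV_left[OF ideal_pr, of "a ^ k"] by simp
next
  case (Suc p)
  note outer = Suc.IH
  show ?case
  proof (induction k)
    case 0
    have "pr (a ^ 0) = UNIV" by (simp add: pr_one)
    then show ?case using sumsp_UNIV_right[OF ideal_pow_ideal, of "R.span B" "Suc p"] by simp
  next
    case (Suc k)
    let ?I = "R.span (insert a B)" and ?J = "R.span B"
    let ?T = "sumsp (ideal_pow ?J (Suc p)) (pr (a ^ Suc k))"
    have T: "ideal ?T" by (rule ideal_sumsp[OF ideal_pow_ideal ideal_pr])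
    have h1: "ideal_pow ?I (Suc p + k) \<subseteq> sumsp (ideal_pow ?J (Suc p)) (pr (a ^ k))" by (rule Suc.IH)
    have h2: "ideal_pow ?I (Suc p + k) \<subseteq> sumsp (ideal_pow ?J p) (pr (a ^ Suc k))"
      using outer[of "Suc k"] by simp
    have "ideal_pow ?I (Suc p + Suc k) = iprod ?I (ideal_pow ?I (Suc p + k))"
      by (simp add: ideal_pow_Suc'[symmetric])
    also have "\<dots> \<subseteq> ?T"
    proof (rule iprod_minimal[OF T])
      fix i w assume i: "i \<in> ?I" and w: "w \<in> ideal_pow ?I (Suc p + k)"
      obtain c where j: "i - c * a \<in> ?J" using i R.span_breakdown_eq by blast
      define j where "j = i - c * a"
      have ij: "i * w = j * w + c * a * w" unfolding j_def by (simp add: algebra_simps)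
      have "j * w \<in> ?T"
      proof -
        obtain u v where uv: "u \<in> ideal_pow ?J p" "v \<in> pr (a ^ Suc k)" "w = u + v"
          using h2 w unfolding sumsp_def by blast
        have "j * u \<in> ideal_pow ?J (Suc p)" using ideal_pow_mult[OF j[folded j_def] uv(1)] .
        moreover have "j * v \<in> pr (a ^ Suc k)" using ideal_multL[OF ideal_pr uv(2)] .
        ultimately show ?thesis unfolding uv(3) distrib_left by (rule sumsp_memI)
      qed
      moreover have "c * a * w \<in> ?T"
      proof -
        obtain u v where uv: "u \<in> ideal_pow ?J (Suc p)" "v \<in> pr (a ^ k)" "w = u + v"
          using h1 w unfolding sumsp_def by blast
        have "c * a * u \<in> ideal_pow ?J (Suc p)" using ideal_multL[OF ideal_pow_ideal uv(1)] .
        moreover have "c * a * v \<in> pr (a ^ Suc k)"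
        proof -
          obtain r where "v = a ^ k * r" using uv(2) unfolding pr_def by blast
          then have "c * a * v = a ^ Suc k * (c * r)" by (simp add: algebra_simps)
          then show ?thesis by (simp add: pr_mem)
        qed
        ultimately show ?thesis unfolding uv(3) distrib_left by (rule sumsp_memI)
      qed
      ultimately show "i * w \<in> ?T" unfolding ij using ideal_add[OF T] by blast
    qed
    finally show ?case .
  qed
qed

lemma rad_fg:
  fixes X :: "'a::comm_ring_1 set"
  assumes X: "ideal X" and fin: "finite B" and rad: "\<forall>b\<in>B. \<exists>k. b ^ k \<in> X"
  shows "\<exists>N. ideal_pow (R.span B) N \<subseteq> X"
  using fin rad
proof (induction B rule: finite_induct)
  case empty
  have "ideal_pow (R.span {}) 1 \<subseteq> X"
    unfolding One_nat_def ideal_pow_Suc' R.span_empty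
    by (rule iprod_minimal[OF X]) (use ideal_0[OF X] in auto)
  then show ?case by blast
next
  case (insert a B)
  obtain p where p: "ideal_pow (R.span B) p \<subseteq> X" using insert by auto
  obtain k where k: "a ^ k \<in> X" using insert by auto
  have "ideal_pow (R.span (insert a B)) (p + k) \<subseteq> sumsp (ideal_pow (R.span B) p) (pr (a ^ k))"
    by (rule pow_insert)
  also have "\<dots> \<subseteq> X"
  proof
    fix z assume "z \<in> sumsp (ideal_pow (R.span B) p) (pr (a ^ k))"
    then obtain u r where "u \<in> ideal_pow (R.span B) p" "z = u + a ^ k * r" unfolding sumsp_def pr_def by blast
    then show "z \<in> X" using p ideal_add[OF X] ideal_multR[OF X k] by blast
  qed
  finally show ?case by blast
qed

lemma power_in_pr:
  fixes m :: "'a::comm_ring_1 set"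
  assumes loc: "local_ring m" and noeth: "noetherian_ring TYPE('a)" and dim: "krull_dim TYPE('a) = 1"
    and z: "z \<in> m" and reg: "\<forall>v. z * v = 0 \<longrightarrow> v = 0"
  shows "\<exists>s. ideal_pow m s \<subseteq> pr z"
proof -
  obtain B where B: "finite B" "R.span B = m"
    using noeth local_ideal[OF loc] unfolding noetherian_ring_def by blast
  have "\<forall>b\<in>B. \<exists>k. b ^ k \<in> pr z"
  proof
    fix b assume "b \<in> B"
    then have "b \<in> m" using B R.span_superset by blast
    then show "\<exists>k. b ^ k \<in> pr z" by (rule rad_m[OF loc dim z reg])
  qed
  then show ?thesis using rad_fg[OF ideal_pr B(1)] B(2) by auto
qed

context module begin

lemma subspace_image_scale: assumes "subspace L" shows "subspace ((\<lambda>v. c *s v) ` L)"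
proof (rule subspaceI)
  show "0 \<in> (\<lambda>v. c *s v) ` L" using subspace_0[OF assms] by (metis image_eqI scale_zero_right)
  show "a + b \<in> (\<lambda>v. c *s v) ` L" if "a \<in> (\<lambda>v. c *s v) ` L" "b \<in> (\<lambda>v. c *s v) ` L" for a b
  proof -
    from that(1) obtain u where u: "u \<in> L" "a = c *s u" by blast
    from that(2) obtain w where w: "w \<in> L" "b = c *s w" by blast
    have "a + b = c *s (u + w)" using u w by (simp add: scale_right_distrib)
    then show ?thesis using subspace_add[OF assms u(1) w(1)] by blast
  qed
  show "d *s a \<in> (\<lambda>v. c *s v) ` L" if "a \<in> (\<lambda>v. c *s v) ` L" for a d
  proof -
    from that obtain u where u: "u \<in> L" "a = c *s u" by blast
    have "d *s a = c *s (d *s u)" using u by (simp add: mult.commute)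
    then show ?thesis using subspace_scale[OF assms u(1)] by blast
  qed
qed

lemma fg_submodule:
  assumes noeth: "noetherian_ring TYPE('a)" and fin: "finite G"
  shows "subspace N \<Longrightarrow> N \<subseteq> span G \<Longrightarrow> \<exists>B. finite B \<and> B \<subseteq> N \<and> span B = N"
  using fin
proof (induction G arbitrary: N rule: finite_induct)
  case empty
  then have "N = {0}" using subspace_0 by auto
  then show ?case by (intro exI[of _ "{}"]) auto
next
  case (insert g G)
  define I where "I = {c. \<exists>u\<in>span G. u + c *s g \<in> N}"
  have "ideal I" unfolding ideal_R
  proof (rule R.subspaceI)
    show "0 \<in> I" unfolding I_def using span_zero subspace_0[OF insert.prems(1)] by force
    show "c1 + c2 \<in> I" if "c1 \<in> I" "c2 \<in> I" for c1 c2
    proof -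
      from that(1) obtain u1 where u1: "u1 \<in> span G" "u1 + c1 *s g \<in> N" unfolding I_def by blast
      from that(2) obtain u2 where u2: "u2 \<in> span G" "u2 + c2 *s g \<in> N" unfolding I_def by blast
      have "(u1 + c1 *s g) + (u2 + c2 *s g) = (u1 + u2) + (c1 + c2) *s g"
        by (simp add: scale_left_distrib algebra_simps)
      moreover have "(u1 + c1 *s g) + (u2 + c2 *s g) \<in> N" using subspace_add[OF insert.prems(1) u1(2) u2(2)] .
      ultimately have "(u1 + u2) + (c1 + c2) *s g \<in> N" by metis
      then show ?thesis unfolding I_def using span_add[OF u1(1) u2(1)] by blast
    qed
    show "d * c \<in> I" if "c \<in> I" for c d
    proof -
      from that obtain u where u: "u \<in> span G" "u + c *s g \<in> N" unfolding I_def by blast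
      have "d *s (u + c *s g) = d *s u + (d * c) *s g" by (simp add: scale_right_distrib)
      moreover have "d *s (u + c *s g) \<in> N" using subspace_scale[OF insert.prems(1) u(2)] .
      ultimately have "d *s u + (d * c) *s g \<in> N" by metis
      then show ?thesis unfolding I_def using span_scale[OF u(1)] by blast
    qed
  qed
  then obtain F where F: "finite F" "R.span F = I" using noeth unfolding noetherian_ring_def by blast
  have "\<forall>a\<in>F. \<exists>u. u \<in> span G \<and> u + a *s g \<in> N"
    using F R.span_superset unfolding I_def by blast
  then obtain ua where ua: "\<And>a. a \<in> F \<Longrightarrow> ua a \<in> span G \<and> ua a + a *s g \<in> N" by metis
  define na where "na a = ua a + a *s g" for a
  have subN': "subspace (N \<inter> span G)" using insert.prems(1) by (simp add: subspace_inter)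
  obtain B' where B': "finite B'" "B' \<subseteq> N \<inter> span G" "span B' = N \<inter> span G"
    using insert.IH[OF subN'] by blast
  define B where "B = B' \<union> na ` F"
  have Bfin: "finite B" unfolding B_def using B'(1) F(1) by simp
  have BN: "B \<subseteq> N" unfolding B_def na_def using B'(2) ua by auto
  have "N \<subseteq> span B"
  proof
    fix v assume v: "v \<in> N"
    then have "v \<in> span (insert g G)" using insert.prems(2) by blast
    then obtain c where c: "v - c *s g \<in> span G" using span_breakdown_eq by blast
    have "c \<in> I" unfolding I_def using c v by (intro CollectI bexI[of _ "v - c *s g"]) auto
    then have "c \<in> R.span F" using F by simp
    then obtain r where r: "c = (\<Sum>a\<in>F. r a * a)" using R.span_finite[OF F(1)] by auto
    define w where "w = v - (\<Sum>a\<in>F. r a *s na a)"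
    have sum_na: "(\<Sum>a\<in>F. r a *s na a) = (\<Sum>a\<in>F. r a *s ua a) + c *s g"
      unfolding na_def r scale_sum_left
      by (simp add: scale_right_distrib sum.distrib scale_scale)
    have "w = (v - c *s g) - (\<Sum>a\<in>F. r a *s ua a)" unfolding w_def sum_na by simp
    moreover have "(\<Sum>a\<in>F. r a *s ua a) \<in> span G" using ua by (intro span_sum span_scale) auto
    ultimately have "w \<in> span G" using c span_diff by simp
    moreover have "(\<Sum>a\<in>F. r a *s na a) \<in> N"
      using ua insert.prems(1) unfolding na_def by (intro subspace_sum subspace_scale) auto
    then have "w \<in> N" unfolding w_def using v insert.prems(1) subspace_diff by blast
    ultimately have "w \<in> span B'" using B'(3) by simp
    then have "w \<in> span B" unfolding B_def by (meson span_mono sup_ge1 subsetD)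
    moreover have "(\<Sum>a\<in>F. r a *s na a) \<in> span B"
      unfolding B_def by (intro span_sum span_scale span_base) auto
    ultimately have "w + (\<Sum>a\<in>F. r a *s na a) \<in> span B" by (rule span_add)
    then show "v \<in> span B" unfolding w_def by simp
  qed
  moreover have "span B \<subseteq> N" using BN insert.prems(1) by (rule span_minimal)
  ultimately show ?case using Bfin BN by blast
qed

lemma acc_stab:
  assumes noeth: "noetherian_ring TYPE('a)" and fin: "finite G"
    and sub: "\<And>j. subspace (K j)" and inL: "\<And>j. K j \<subseteq> span G" and inc: "\<And>j. K j \<subseteq> K (Suc j)"
  shows "\<exists>t. \<forall>j\<ge>t. K j = K t"
proof -
  have mono: "K i \<subseteq> K j" if "i \<le> j" for i j
    using that by (induction j rule: dec_induct) (use inc in blast)+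
  define U where "U = (\<Union>j. K j)"
  have "subspace U" unfolding U_def
  proof (rule subspaceI)
    show "0 \<in> (\<Union>j. K j)" using subspace_0[OF sub[of 0]] by blast
    show "a + b \<in> (\<Union>j. K j)" if "a \<in> (\<Union>j. K j)" "b \<in> (\<Union>j. K j)" for a b
    proof -
      from that obtain i j where "a \<in> K i" "b \<in> K j" by blast
      then have "a \<in> K (max i j)" "b \<in> K (max i j)" using mono[of i "max i j"] mono[of j "max i j"] by auto
      then show ?thesis using subspace_add[OF sub] by blast
    qed
    show "c *s a \<in> (\<Union>j. K j)" if "a \<in> (\<Union>j. K j)" for a c
      using that subspace_scale[OF sub] by blast
  qed
  moreover have "U \<subseteq> span G" unfolding U_def using inL by blast
  ultimately obtain B where B: "finite B" "B \<subseteq> U" "span B = U" using fg_submodule[OF noeth fin] by blast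
  have "\<forall>b\<in>B. \<exists>j. b \<in> K j" using B(2) unfolding U_def by blast
  then obtain idx where idx: "\<And>b. b \<in> B \<Longrightarrow> b \<in> K (idx b)" by metis
  define t where "t = Max (insert 0 (idx ` B))"
  have "B \<subseteq> K t"
  proof
    fix b assume "b \<in> B"
    then have "idx b \<le> t" unfolding t_def using B(1) by (intro Max_ge) auto
    then show "b \<in> K t" using mono idx \<open>b \<in> B\<close> by blast
  qed
  then have "U \<subseteq> K t" using B(3) span_minimal[OF _ sub] by blast
  then have "\<forall>j\<ge>t. K j = K t" using mono unfolding U_def by blast
  then show ?thesis by blast
qed

lemma nakayama:
  assumes loc: "local_ring m" and z: "z \<in> m" and fin: "finite B"
  shows "span B \<subseteq> (\<lambda>v. z *s v) ` span B \<Longrightarrow> span B = {0}"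
  using fin
proof (induction B rule: finite_induct)
  case empty then show ?case by simp
next
  case (insert b B)
  have "b \<in> span (insert b B)" by (rule span_base) simp
  then obtain w where w: "w \<in> span (insert b B)" "b = z *s w" using insert.prems by blast
  then obtain c where c: "w - c *s b \<in> span B" using span_breakdown_eq by blast
  define u where "u = w - c *s b"
  have "z *s u = z *s w - z *s (c *s b)" unfolding u_def by (rule scale_right_diff_distrib)
  also have "\<dots> = b - (z * c) *s b" by (simp only: scale_scale w(2)[symmetric])
  finally have eq: "(1 - z * c) *s b = z *s u" by (simp add: scale_left_diff_distrib)
  have "z * c \<in> m" using ideal_multR[OF local_ideal[OF loc] z] .
  then have "1 - z * c \<notin> m"
    using ideal_add[OF local_ideal[OF loc]] one_notin[OF loc] by force
  then obtain e where e: "1 = (1 - z * c) * e" using local_mem[OF loc] by (metis dvdE)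
  have "b = e *s ((1 - z * c) *s b)" using e by (simp add: scale_scale mult.commute)
  also have "\<dots> = (e * z) *s u" unfolding eq by (simp add: scale_scale)
  finally have "b \<in> span B" using c span_scale unfolding u_def by metis
  then have "span (insert b B) = span B"
    by (metis insert_subset span_mono span_span span_superset subset_antisym subset_insertI)
  then show ?case using insert.IH insert.prems by simp
qed

lemma krull_int:
  assumes noeth: "noetherian_ring TYPE('a)" and loc: "local_ring m" and z: "z \<in> m"
    and fin: "finite G"
  shows "(\<Inter>k. (\<lambda>v. (z ^ k) *s v) ` span G) = {0}"
proof -
  let ?L = "span G"
  define N where "N = (\<Inter>k. (\<lambda>v. (z ^ k) *s v) ` ?L)"
  have subN: "subspace N" unfolding N_def
    by (rule subspace_Int) (rule subspace_image_scale, simp)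
  define K where "K j = {v \<in> ?L. (z ^ j) *s v = 0}" for j
  have subK: "subspace (K j)" for j
    unfolding K_def
  proof (rule subspaceI)
    show "0 \<in> {v \<in> ?L. (z ^ j) *s v = 0}" by (simp add: span_zero)
    show "a + b \<in> {v \<in> ?L. (z ^ j) *s v = 0}" if "a \<in> {v \<in> ?L. (z ^ j) *s v = 0}" "b \<in> {v \<in> ?L. (z ^ j) *s v = 0}" for a b
      using that by (simp add: span_add scale_right_distrib)
    show "c *s a \<in> {v \<in> ?L. (z ^ j) *s v = 0}" if "a \<in> {v \<in> ?L. (z ^ j) *s v = 0}" for a c
      using that span_scale[of a G c] scale_left_commute[of "z ^ j" c a] by simp
  qed
  have incK: "K j \<subseteq> K (Suc j)" for j
  proof
    fix v assume "v \<in> K j"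
    then have "z *s ((z ^ j) *s v) = 0" "v \<in> ?L" unfolding K_def by auto
    then show "v \<in> K (Suc j)" unfolding K_def by (simp add: scale_scale)
  qed
  have KL: "K j \<subseteq> ?L" for j unfolding K_def by blast
  obtain t where t: "\<forall>j\<ge>t. K j = K t"
    using acc_stab[of G K, OF noeth fin subK KL incK] by blast
  have NzN: "N \<subseteq> (\<lambda>v. z *s v) ` N"
  proof
    fix w assume w: "w \<in> N"
    then obtain u where u: "u \<in> ?L" "w = (z ^ Suc t) *s u" unfolding N_def by blast
    define w' where "w' = (z ^ t) *s u"
    have "w' \<in> (\<lambda>v. (z ^ j) *s v) ` ?L" for j
    proof -
      obtain uj where uj: "uj \<in> ?L" "w = (z ^ (j + Suc t)) *s uj" using w unfolding N_def by blast
      have pw: "z ^ (j + Suc t) = z ^ Suc t * z ^ j" by (simp only: power_add mult.commute)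
      have "(z ^ Suc t) *s (u - (z ^ j) *s uj) = (z ^ Suc t) *s u - (z ^ Suc t * z ^ j) *s uj"
        by (simp only: scale_right_diff_distrib scale_scale)
      also have "\<dots> = 0" using u(2) uj(2) unfolding pw by simp
      finally have "(z ^ Suc t) *s (u - (z ^ j) *s uj) = 0" .
      then have "u - (z ^ j) *s uj \<in> K (Suc t)" unfolding K_def using u(1) uj(1) by (simp add: span_diff span_scale)
      then have "u - (z ^ j) *s uj \<in> K t" using t by (metis le_SucI order_refl)
      then have "(z ^ t) *s (u - (z ^ j) *s uj) = 0" unfolding K_def by simp
      then have "(z ^ t) *s u = (z ^ t * z ^ j) *s uj"
        by (simp only: scale_right_diff_distrib scale_scale right_minus_eq)
      then have "w' = (z ^ j) *s ((z ^ t) *s uj)" unfolding w'_def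
        by (simp only: scale_scale mult.commute)
      then show ?thesis using span_scale[OF uj(1)] by blast
    qed
    then have "w' \<in> N" unfolding N_def by blast
    moreover have "w = z *s w'" unfolding w'_def u(2) by (simp add: scale_scale)
    ultimately show "w \<in> (\<lambda>v. z *s v) ` N" by blast
  qed
  moreover have "N \<subseteq> ?L"
  proof
    fix x assume "x \<in> N"
    then have "x \<in> (\<lambda>v. (z ^ 0) *s v) ` ?L" unfolding N_def by blast
    then show "x \<in> ?L" by auto
  qed
  ultimately obtain B where B: "finite B" "B \<subseteq> N" "span B = N" using fg_submodule[OF noeth fin subN] by blast
  have "span B = {0}" by (rule nakayama[OF loc z B(1)]) (use B(3) NzN in simp)
  then show ?thesis using B(3) unfolding N_def by simp
qed

end

context module begin

lemma span_sub_eq: "subspace P \<Longrightarrow> span P = P" using span_eq_iff by blast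

lemma span_insert_span: "span (insert b (span S)) = span (insert b S)"
proof
  show "span (insert b S) \<subseteq> span (insert b (span S))" by (intro span_mono) (use span_superset in blast)
  have "insert b (span S) \<subseteq> span (insert b S)"
    using span_superset[of "insert b S"] span_mono[of S "insert b S"] by blast
  then show "span (insert b (span S)) \<subseteq> span (insert b S)" by (rule span_minimal) simp
qed

lemma gen_len1:
  assumes loc: "local_ring m" and P: "subspace P" and b: "\<forall>r\<in>m. r *s b \<in> P"
  shows "module_length scale P (span (insert b P)) \<le> 1"
proof (rule ml_le1)
  fix Q assume Q: "subspace Q" "P \<subseteq> Q" "Q \<subseteq> span (insert b P)"
  show "Q = P \<or> Q = span (insert b P)"
  proof (cases "Q = P")
    case False
    then obtain k where k: "k \<in> Q" "k \<notin> P" using Q(2) by blast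
    then obtain r where r: "k - r *s b \<in> span P" using Q(3) span_breakdown_eq by blast
    moreover have "span P = P" using P span_eq_iff by blast
    ultimately have r': "k - r *s b \<in> P" by simp
    have "r \<notin> m"
    proof
      assume "r \<in> m"
      then have "r *s b \<in> P" using b by blast
      then have "(k - r *s b) + r *s b \<in> P" using r' P subspace_add by blast
      then show False using k by simp
    qed
    then obtain e where e: "1 = r * e" using local_mem[OF loc] by (metis dvdE)
    have "r *s b = k - (k - r *s b)" by simp
    then have "r *s b \<in> Q" using k(1) r' Q(1,2) subspace_diff by (metis subsetD)
    then have "e *s (r *s b) \<in> Q" using Q(1) subspace_scale by blast
    moreover have "e *s (r *s b) = b" using e by (simp add: scale_scale mult.commute)
    ultimately have "b \<in> Q" by simp
    then have "insert b P \<subseteq> Q" using Q(2) by blast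
    then have "span (insert b P) \<subseteq> Q" using span_minimal Q(1) by blast
    then show ?thesis using Q(3) by blast
  qed simp
qed

lemma gen_len:
  assumes loc: "local_ring m" and fin: "finite B" and P: "subspace P"
  shows "(\<forall>r\<in>m. \<forall>b\<in>B. r *s b \<in> P) \<Longrightarrow> module_length scale P (span (P \<union> B)) \<le> enat (card B)"
  using fin
proof (induction B rule: finite_induct)
  case empty
  show ?case unfolding Un_empty_right span_sub_eq[OF P] ml_refl by simp
next
  case (insert b B)
  define P' where "P' = span (P \<union> B)"
  have e: "span (P \<union> insert b B) = span (insert b P')"
    unfolding P'_def span_insert_span by simp
  have PP': "P \<subseteq> P'" unfolding P'_def using span_superset by blast
  have P'sub: "P' \<subseteq> span (insert b P')" using span_superset by blast
  have h1: "module_length scale P P' \<le> enat (card B)" unfolding P'_def using insert by simp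
  have h2: "module_length scale P' (span (insert b P')) \<le> 1"
    using gen_len1[OF loc, of P' b] insert.prems PP' unfolding P'_def by auto
  have "module_length scale P (span (P \<union> insert b B)) = module_length scale P P' + module_length scale P' (span (insert b P'))"
    unfolding e by (rule ml_add[OF P _ _ PP' P'sub]) (simp_all add: P'_def)
  also have "\<dots> \<le> enat (card B) + 1" using h1 h2 by (rule add_mono)
  also have "\<dots> = enat (card (insert b B))" using insert by (simp add: one_enat_def)
  finally show ?case .
qed

end

lemma len_pow_fin:
  fixes m :: "'a::comm_ring_1 set"
  assumes loc: "local_ring m" and noeth: "noetherian_ring TYPE('a)"
  shows "module_length (*) (ideal_pow m k) UNIV \<noteq> \<infinity>"
proof (induction k)
  case 0 show ?case unfolding ideal_pow.simps(1) R.ml_refl by simp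
next
  case (Suc k)
  obtain B where B: "finite B" "R.span B = ideal_pow m k"
    using noeth ideal_pow_ideal unfolding noetherian_ring_def by blast
  have Bk: "B \<subseteq> ideal_pow m k" using B(2) R.span_superset by blast
  have sp: "R.span (ideal_pow m (Suc k) \<union> B) = ideal_pow m k"
  proof
    show "R.span (ideal_pow m (Suc k) \<union> B) \<subseteq> ideal_pow m k"
      using ideal_pow_dec Bk ideal_pow_ideal[of m k] by (intro R.span_minimal) (auto simp: ideal_R)
    show "ideal_pow m k \<subseteq> R.span (ideal_pow m (Suc k) \<union> B)"
      using B(2) R.span_mono[of B "ideal_pow m (Suc k) \<union> B"] by blast
  qed
  have "\<forall>r\<in>m. \<forall>b\<in>B. r * b \<in> ideal_pow m (Suc k)" using Bk ideal_pow_mult by blast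
  then have h: "module_length (*) (ideal_pow m (Suc k)) (ideal_pow m k) \<le> enat (card B)"
    using R.gen_len[OF loc B(1), of "ideal_pow m (Suc k)"] ideal_pow_ideal[of m "Suc k"] sp
    by (simp add: ideal_R)
  have "module_length (*) (ideal_pow m (Suc k)) UNIV =
      module_length (*) (ideal_pow m (Suc k)) (ideal_pow m k) + module_length (*) (ideal_pow m k) UNIV"
    using ideal_pow_ideal[of m "Suc k"] ideal_pow_ideal[of m k] ideal_pow_dec[of m k]
    by (intro R.ml_add) (auto simp: ideal_R)
  moreover have "module_length (*) (ideal_pow m (Suc k)) (ideal_pow m k) \<noteq> \<infinity>"
    using h by (metis enat_ord_simps(5) infinity_ileE)
  ultimately show ?case using Suc.IH by (metis plus_eq_infty_iff_enat)
qed

lemma len_iso: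
  fixes x :: "'a::comm_ring_1"
  assumes reg: "\<forall>v. x * v = 0 \<longrightarrow> v = 0" and J: "ideal J" and K: "ideal K" and Kx: "K \<subseteq> pr x"
    and col: "{a. x * a \<in> K} = J"
  shows "module_length (*) K (pr x) = module_length (*) J UNIV"
proof (rule antisym)
  show "module_length (*) J UNIV \<le> module_length (*) K (pr x)"
  proof (rule R.ml_iso[where f = "\<lambda>Q. (*) x ` Q"])
    show "R.subspace ((*) x ` Q)" if "R.subspace Q" for Q using ideal_image that by (simp add: ideal_R)
    show "(*) x ` Q1 \<subset> (*) x ` Q2" if Q12: "Q1 \<subset> Q2" for Q1 Q2
    proof -
      obtain q where q: "q \<in> Q2" "q \<notin> Q1" using Q12 by blast
      have "x * q \<notin> (*) x ` Q1"
      proof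
        assume "x * q \<in> (*) x ` Q1"
        then obtain q' where q': "q' \<in> Q1" "x * q = x * q'" by blast
        then have "x * (q - q') = 0" by (simp add: right_diff_distrib)
        then have "q - q' = 0" using reg by blast
        then have "q = q'" by simp
        then show False using q q' by simp
      qed
      then show ?thesis using Q12 q by blast
    qed
    show "(*) x ` J = K"
    proof
      show "(*) x ` J \<subseteq> K" using col by blast
      show "K \<subseteq> (*) x ` J"
      proof
        fix k assume "k \<in> K"
        moreover then obtain a where "k = x * a" using Kx unfolding pr_def by blast
        ultimately show "k \<in> (*) x ` J" using col by blast
      qed
    qed
    show "(*) x ` UNIV = pr x" unfolding pr_def by simp
  qed
  show "module_length (*) K (pr x) \<le> module_length (*) J UNIV"
  proof (rule R.ml_iso[where f = "\<lambda>Q. {a. x * a \<in> Q}"])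
    show "R.subspace {a. x * a \<in> Q}" if "R.subspace Q" for Q
    proof (rule R.subspaceI)
      show "0 \<in> {a. x * a \<in> Q}" using R.subspace_0[OF that] by simp
      show "a + b \<in> {a. x * a \<in> Q}" if "a \<in> {a. x * a \<in> Q}" "b \<in> {a. x * a \<in> Q}" for a b
        using that R.subspace_add[OF \<open>R.subspace Q\<close>] by (simp add: distrib_left)
      show "c * a \<in> {a. x * a \<in> Q}" if "a \<in> {a. x * a \<in> Q}" for a c
        using that R.subspace_scale[OF \<open>R.subspace Q\<close>, of "x * a" c] by (simp add: mult.left_commute)
    qed
    show "{a. x * a \<in> Q1} \<subset> {a. x * a \<in> Q2}" if Q12: "Q2 \<subseteq> pr x" "Q1 \<subset> Q2" for Q1 Q2
    proof -
      obtain q where q: "q \<in> Q2" "q \<notin> Q1" using Q12 by blast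
      then obtain a where "q = x * a" using Q12(1) unfolding pr_def by blast
      then show ?thesis using q Q12 by blast
    qed
    show "{a. x * a \<in> K} = J" by (rule col)
    show "{a. x * a \<in> pr x} = UNIV" using pr_mem by blast
  qed
qed

lemma colon_eq:
  fixes m :: "'a::comm_ring_1 set"
  assumes x: "x \<in> m" and reg: "\<forall>v. x * v = 0 \<longrightarrow> v = 0" and s: "ideal_pow m s \<subseteq> pr x"
    and sup: "\<forall>n>c. {a. x * a \<in> ideal_pow m n} \<inter> ideal_pow m c = ideal_pow m (n - 1)"
    and n: "s + c + 1 \<le> n"
  shows "{a. x * a \<in> ideal_pow m n} = ideal_pow m (n - 1)"
proof
  show "ideal_pow m (n - 1) \<subseteq> {a. x * a \<in> ideal_pow m n}"
  proof
    fix a assume "a \<in> ideal_pow m (n - 1)"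
    then have "x * a \<in> ideal_pow m (Suc (n - 1))" by (rule ideal_pow_mult[OF x])
    then show "a \<in> {a. x * a \<in> ideal_pow m n}" using n by simp
  qed
  show "{a. x * a \<in> ideal_pow m n} \<subseteq> ideal_pow m (n - 1)"
  proof
    fix a assume "a \<in> {a. x * a \<in> ideal_pow m n}"
    then have xa: "x * a \<in> ideal_pow m n" by simp
    have "ideal_pow m n = ideal_pow m (s + (n - s))" using n by simp
    also have "\<dots> \<subseteq> (*) x ` ideal_pow m (n - s)" by (rule pow_shift[OF s])
    finally obtain b where b: "b \<in> ideal_pow m (n - s)" "x * a = x * b" using xa by blast
    then have "x * (a - b) = 0" by (simp add: right_diff_distrib)
    then have "a - b = 0" using reg by blast
    then have "a = b" by simp
    moreover have "c \<le> n - s" using n by simp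
    ultimately have "a \<in> ideal_pow m c" using b(1) ideal_pow_anti[of c "n - s" m] by blast
    moreover have "c < n" using n by simp
    ultimately have "a \<in> {a. x * a \<in> ideal_pow m n} \<inter> ideal_pow m c" using xa by blast
    then show "a \<in> ideal_pow m (n - 1)" using sup \<open>c < n\<close> by blast
  qed
qed

lemma mult_eq:
  fixes m :: "'a::comm_ring_1 set"
  assumes loc: "local_ring m" and noeth: "noetherian_ring TYPE('a)" and dim: "krull_dim TYPE('a) = 1"
    and reg: "\<forall>v. x * v = 0 \<longrightarrow> v = 0" and s: "ideal_pow m s \<subseteq> pr x"
    and n01: "1 \<le> n0" and n0s: "s \<le> n0"
    and col: "\<And>n. n0 \<le> n \<Longrightarrow> {a. x * a \<in> ideal_pow m n} = ideal_pow m (n - 1)"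
  shows "\<exists>l. module_length (*) (pr x) UNIV = enat l \<and> multiplicity m = l"
proof -
  define len where "len n = module_length (*) (ideal_pow m n) UNIV" for n
  have add_x: "len n = module_length (*) (ideal_pow m n) (pr x) + module_length (*) (pr x) UNIV"
    if "s \<le> n" for n
    unfolding len_def
  proof (rule R.ml_add)
    show "ideal_pow m n \<subseteq> pr x" using ideal_pow_anti[OF that] s by blast
  qed (use ideal_pow_ideal ideal_pr in \<open>simp_all add: ideal_R\<close>)
  have fin: "len n \<noteq> \<infinity>" for n unfolding len_def by (rule len_pow_fin[OF loc noeth])
  obtain l where l: "module_length (*) (pr x) UNIV = enat l"
    using add_x[of s] fin[of s] by (cases "module_length (*) (pr x) UNIV") auto
  have step: "len n = len (n - 1) + enat l" if "n0 \<le> n" for n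
  proof -
    have "module_length (*) (ideal_pow m n) (pr x) = module_length (*) (ideal_pow m (n - 1)) UNIV"
    proof (rule len_iso[OF reg ideal_pow_ideal ideal_pow_ideal])
      show "ideal_pow m n \<subseteq> pr x" using ideal_pow_anti[of s n m] s n0s that by auto
      show "{a. x * a \<in> ideal_pow m n} = ideal_pow m (n - 1)" using col[OF that] .
    qed
    then show ?thesis using add_x[of n] n0s that l unfolding len_def by simp
  qed
  define f where "f n = the_enat (len n)" for n
  have lenf: "len n = enat (f n)" for n unfolding f_def using fin[of n] by (cases "len n") auto
  have fstep: "f n = f (n - 1) + l" if "n0 \<le> n" for n
    using step[OF that] unfolding lenf by simp
  have fj: "f (n0 - 1 + j) = f (n0 - 1) + j * l" for j
  proof (induction j)
    case 0 then show ?case by simp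
  next
    case (Suc j)
    have "f (n0 - 1 + Suc j) = f (n0 - 1 + Suc j - 1) + l" by (rule fstep) (use n01 in simp)
    also have "n0 - 1 + Suc j - 1 = n0 - 1 + j" by simp
    finally show ?case using Suc.IH by simp
  qed
  define B where "B = real (f (n0 - 1)) - real (n0 - 1) * real l"
  have ev: "\<forall>\<^sub>F n in sequentially. B / real n + real l = real (f n) / real n"
    unfolding eventually_sequentially
  proof (intro exI allI impI)
    fix n assume n: "n0 \<le> n"
    then have "f n = f (n0 - 1) + (n - (n0 - 1)) * l" using fj[of "n - (n0 - 1)"] by simp
    then have "real (f n) = real (f (n0 - 1)) + (real n - real (n0 - 1)) * real l"
      using n by (simp add: of_nat_diff)
    moreover have "real n > 0" using n n01 by simp
    ultimately show "B / real n + real l = real (f n) / real n"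
      unfolding B_def by (simp add: field_simps)
  qed
  have lim0: "(\<lambda>n. B / real n + real l) \<longlonglongrightarrow> 0 + real l"
    by (intro tendsto_add lim_const_over_n tendsto_const)
  have lim: "(\<lambda>n. real (f n) / real n) \<longlonglongrightarrow> real l"
    using tendsto_cong[OF ev] lim0 by simp
  have dimv: "the_enat (krull_dim TYPE('a)) = 1" using dim by (simp add: one_enat_def)
  have seq: "(\<lambda>n. fact (the_enat (krull_dim TYPE('a))) * real (the_enat (module_length (*) (ideal_pow m n) UNIV))
       / real n ^ the_enat (krull_dim TYPE('a))) = (\<lambda>n. real (f n) / real n)"
    unfolding dimv f_def len_def by simp
  have "multiplicity m = l"
    unfolding multiplicity_def seq
  proof (rule the_equality)
    show "(\<lambda>n. real (f n) / real n) \<longlonglongrightarrow> real l" by (rule lim)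
    fix e assume "(\<lambda>n. real (f n) / real n) \<longlonglongrightarrow> real e"
    then have "real e = real l" using lim LIMSEQ_unique by blast
    then show "e = l" by simp
  qed
  then show ?thesis using l by blast
qed


lemma pow_step_sum:
  fixes m :: "'a::comm_ring_1 set"
  assumes "ideal_pow m j \<subseteq> sumsp (pr x) (ideal_pow m (Suc j))"
  shows "ideal_pow m (Suc j) \<subseteq> sumsp (pr x) (ideal_pow m (Suc (Suc j)))"
  unfolding ideal_pow_Suc'[of m j]
proof (rule iprod_minimal[OF ideal_sumsp[OF ideal_pr ideal_pow_ideal]])
  fix a b assume a: "a \<in> m" and b: "b \<in> ideal_pow m j"
  then obtain t b' where tb: "b' \<in> ideal_pow m (Suc j)" "b = x * t + b'"
    using assms unfolding sumsp_def pr_def by blast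
  have "a * b = x * (a * t) + a * b'" unfolding tb(2) by (simp add: algebra_simps)
  moreover have "a * b' \<in> ideal_pow m (Suc (Suc j))" by (rule ideal_pow_mult[OF a tb(1)])
  ultimately show "a * b \<in> sumsp (pr x) (ideal_pow m (Suc (Suc j)))"
    using sumsp_memI[OF pr_mem] by metis
qed

lemma sumsp_idem: "ideal A \<Longrightarrow> ideal B \<Longrightarrow> sumsp A (sumsp A B) \<subseteq> sumsp A B"
proof
  fix z assume A: "ideal A" and B: "ideal B" and z: "z \<in> sumsp A (sumsp A B)"
  then obtain a a' b where "a \<in> A" "a' \<in> A" "b \<in> B" "z = a + (a' + b)" unfolding sumsp_def by blast
  moreover have "a + (a' + b) = (a + a') + b" by (simp add: add.assoc)
  ultimately show "z \<in> sumsp A B" using ideal_add[OF A] sumsp_memI by metis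
qed

lemma sumsp_mono2: "B \<subseteq> B' \<Longrightarrow> sumsp A B \<subseteq> sumsp A B'"
  unfolding sumsp_def by blast

lemma stab_to_pr:
  fixes m :: "'a::comm_ring_1 set"
  assumes s: "ideal_pow m s \<subseteq> pr x" and k: "ideal_pow m k \<subseteq> sumsp (pr x) (ideal_pow m (Suc k))"
  shows "ideal_pow m k \<subseteq> pr x"
proof -
  have st: "ideal_pow m (k + j) \<subseteq> sumsp (pr x) (ideal_pow m (Suc (k + j)))" for j
  proof (induction j)
    case 0 then show ?case using k by simp
  next
    case (Suc j) then show ?case using pow_step_sum[of m "k + j" x] by simp
  qed
  have acc: "ideal_pow m k \<subseteq> sumsp (pr x) (ideal_pow m (k + j))" for j
  proof (induction j)
    case 0 then show ?case using sumsp_right[OF ideal_pr, of _ "ideal_pow m k" x] by auto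
  next
    case (Suc j)
    have "ideal_pow m k \<subseteq> sumsp (pr x) (sumsp (pr x) (ideal_pow m (Suc (k + j))))"
      using Suc.IH sumsp_mono2[OF st[of j], of "pr x"] by blast
    also have "\<dots> \<subseteq> sumsp (pr x) (ideal_pow m (Suc (k + j)))"
      by (rule sumsp_idem[OF ideal_pr ideal_pow_ideal])
    finally show ?case by simp
  qed
  have "ideal_pow m (k + s) \<subseteq> pr x" using ideal_pow_anti[of s "k + s" m] s by auto
  then have "sumsp (pr x) (ideal_pow m (k + s)) \<subseteq> pr x"
    using ideal_add[OF ideal_pr] unfolding sumsp_def by blast
  then show ?thesis using acc[of s] by blast
qed

lemma pow_in_pr_len:
  fixes m :: "'a::comm_ring_1 set"
  assumes l: "module_length (*) (pr x) UNIV = enat l" and s: "ideal_pow m s \<subseteq> pr x"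
  shows "ideal_pow m l \<subseteq> pr x"
proof (rule ccontr)
  assume nl: "\<not> ideal_pow m l \<subseteq> pr x"
  define D where "D k = sumsp (pr x) (ideal_pow m k)" for k
  have Did: "ideal (D k)" for k unfolding D_def by (rule ideal_sumsp[OF ideal_pr ideal_pow_ideal])
  have strict: "D (Suc k) \<subset> D k" if "k \<le> l" for k
  proof
    show "D (Suc k) \<subseteq> D k" unfolding D_def by (rule sumsp_mono2[OF ideal_pow_dec])
    show "D (Suc k) \<noteq> D k"
    proof
      assume eq: "D (Suc k) = D k"
      have "ideal_pow m k \<subseteq> D k" unfolding D_def using sumsp_right[OF ideal_pr] by blast
      then have "ideal_pow m k \<subseteq> pr x" using stab_to_pr[OF s] eq unfolding D_def by metis
      then show False using nl ideal_pow_anti[OF that, of m] by blast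
    qed
  qed
  define E where "E i = (if i = 0 then pr x else D (Suc l - i))" for i
  have "schain (*) (pr x) UNIV (Suc l) E"
    unfolding schain_def
  proof (intro conjI allI impI)
    show "E 0 = pr x" unfolding E_def by simp
    show "E (Suc l) = UNIV" unfolding E_def D_def using sumsp_UNIV_right[OF ideal_pr] by simp
    fix i
    show "R.subspace (E i)" if "i \<le> Suc l" unfolding E_def ideal_R[symmetric] using Did[of "Suc l - i"] ideal_pr[of x] by simp
    show "E i \<subset> E (Suc i)" if i: "i < Suc l"
    proof (cases "i = 0")
      case True
      have "pr x \<subseteq> D l" unfolding D_def using sumsp_left[OF ideal_pow_ideal] by blast
      moreover have "ideal_pow m l \<subseteq> D l" unfolding D_def using sumsp_right[OF ideal_pr] by blast
      ultimately have "pr x \<subset> D l" using nl by blast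
      then show ?thesis using True unfolding E_def by simp
    next
      case False
      then have "E i = D (Suc (l - i))" "E (Suc i) = D (l - i)" unfolding E_def using i by (auto simp: Suc_diff_le)
      then show ?thesis using strict[of "l - i"] by simp
    qed
  qed
  then have "enat (Suc l) \<le> module_length (*) (pr x) UNIV" by (rule R.ml_ge)
  then show False using l by simp
qed

lemma free_scale_apply: "free_scale r u i = r * u i" by (simp add: free_scale_def)

global_interpretation F: module "free_scale :: 'a::comm_ring_1 \<Rightarrow> (nat \<Rightarrow> 'a) \<Rightarrow> (nat \<Rightarrow> 'a)"
  by standard (auto simp: free_scale_def algebra_simps fun_eq_iff)

lemma free_scale_zero: "free_scale r 0 = 0" by (simp add: free_scale_def fun_eq_iff)

lemma module_sum3:
  assumes "module s2"
  shows "module (sum3_scale free_scale s2)"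
proof -
  interpret L: module s2 by (rule assms)
  show ?thesis
    by standard (auto simp: sum3_scale_def F.scale_right_distrib F.scale_left_distrib
        L.scale_right_distrib L.scale_left_distrib algebra_simps)
qed

lemma IS3_decomp:
  fixes s2 :: "'a::comm_ring_1 \<Rightarrow> 'b::ab_group_add \<Rightarrow> 'b" and M :: "(nat \<Rightarrow> 'a) set"
  assumes mod2: "module s2" and Msub: "F.subspace M" and Lsub: "module.subspace s2 L" and I: "ideal I"
  shows "(a, 0, 0) \<in> ideal_smult (sum3_scale free_scale s2) I (UNIV \<times> M \<times> L) \<longleftrightarrow> a \<in> I"
    and "(0, 0, v) \<in> ideal_smult (sum3_scale free_scale s2) I (UNIV \<times> M \<times> L) \<longleftrightarrow> v \<in> ideal_smult s2 I L"
proof -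
  interpret L: module s2 by (rule mod2)
  interpret S: module "sum3_scale free_scale s2" by (rule module_sum3[OF mod2])
  let ?G = "{sum3_scale free_scale s2 r v | r v. r \<in> I \<and> v \<in> UNIV \<times> M \<times> L}"
  have IS: "ideal_smult (sum3_scale free_scale s2) I (UNIV \<times> M \<times> L) = S.span ?G"
    by (simp add: ideal_smult_def)
  have ISL: "ideal_smult s2 I L = L.span {s2 r v | r v. r \<in> I \<and> v \<in> L}"
    by (simp add: ideal_smult_def)
  define T :: "('a \<times> (nat \<Rightarrow> 'a) \<times> 'b) set" where "T = {p. fst p \<in> I \<and> snd (snd p) \<in> ideal_smult s2 I L}"
  have Tsub: "S.subspace T"
    unfolding T_def ISL
  proof (rule S.subspaceI)
    show "0 \<in> {p. fst p \<in> I \<and> snd (snd p) \<in> L.span {s2 r v |r v. r \<in> I \<and> v \<in> L}}"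
      using ideal_0[OF I] L.span_zero by simp
    show "p + q \<in> {p. fst p \<in> I \<and> snd (snd p) \<in> L.span {s2 r v |r v. r \<in> I \<and> v \<in> L}}"
      if "p \<in> {p. fst p \<in> I \<and> snd (snd p) \<in> L.span {s2 r v |r v. r \<in> I \<and> v \<in> L}}"
         "q \<in> {p. fst p \<in> I \<and> snd (snd p) \<in> L.span {s2 r v |r v. r \<in> I \<and> v \<in> L}}" for p q
      using that ideal_add[OF I] L.span_add by auto
    show "sum3_scale free_scale s2 c p \<in> {p. fst p \<in> I \<and> snd (snd p) \<in> L.span {s2 r v |r v. r \<in> I \<and> v \<in> L}}"
      if "p \<in> {p. fst p \<in> I \<and> snd (snd p) \<in> L.span {s2 r v |r v. r \<in> I \<and> v \<in> L}}" for c p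
      using that ideal_multL[OF I] L.span_scale by (auto simp: sum3_scale_def)
  qed
  have GT: "?G \<subseteq> T"
  proof
    fix p assume "p \<in> ?G"
    then obtain r a u w where p: "r \<in> I" "u \<in> M" "w \<in> L" "p = sum3_scale free_scale s2 r (a, u, w)" by blast
    have "r * a \<in> I" using ideal_multR[OF I p(1)] .
    moreover have "s2 r w \<in> ideal_smult s2 I L" unfolding ISL using p by (intro L.span_base) blast
    ultimately show "p \<in> T" unfolding T_def p(4) sum3_scale_def by simp
  qed
  have ISsubT: "ideal_smult (sum3_scale free_scale s2) I (UNIV \<times> M \<times> L) \<subseteq> T"
    unfolding IS using S.span_minimal[OF GT Tsub] .
  have M0: "0 \<in> M" using F.subspace_0[OF Msub] .
  have L0: "0 \<in> L" using L.subspace_0[OF Lsub] .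
  show "(a, 0, 0) \<in> ideal_smult (sum3_scale free_scale s2) I (UNIV \<times> M \<times> L) \<longleftrightarrow> a \<in> I"
  proof
    assume "(a, 0, 0) \<in> ideal_smult (sum3_scale free_scale s2) I (UNIV \<times> M \<times> L)"
    then show "a \<in> I" using ISsubT unfolding T_def by auto
  next
    assume a: "a \<in> I"
    have "(a, 0, 0) = sum3_scale free_scale s2 a (1, 0, 0)" by (simp add: sum3_scale_def free_scale_zero)
    then have "(a, 0, 0) \<in> ?G" using a M0 L0 by blast
    then show "(a, 0, 0) \<in> ideal_smult (sum3_scale free_scale s2) I (UNIV \<times> M \<times> L)"
      unfolding IS by (rule S.span_base)
  qed
  show "(0, 0, v) \<in> ideal_smult (sum3_scale free_scale s2) I (UNIV \<times> M \<times> L) \<longleftrightarrow> v \<in> ideal_smult s2 I L"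
  proof
    assume "(0, 0, v) \<in> ideal_smult (sum3_scale free_scale s2) I (UNIV \<times> M \<times> L)"
    then show "v \<in> ideal_smult s2 I L" using ISsubT unfolding T_def by auto
  next
    assume v: "v \<in> ideal_smult s2 I L"
    have sub: "L.subspace {w. (0, 0, w) \<in> S.span ?G}"
    proof (rule L.subspaceI)
      show "0 \<in> {w. (0, 0, w) \<in> S.span ?G}" using S.span_zero by (simp add: zero_prod_def)
      show "w1 + w2 \<in> {w. (0, 0, w) \<in> S.span ?G}" if "w1 \<in> {w. (0, 0, w) \<in> S.span ?G}" "w2 \<in> {w. (0, 0, w) \<in> S.span ?G}" for w1 w2
        using S.span_add[of "(0, 0, w1)" ?G "(0, 0, w2)"] that by simp
      show "s2 c w \<in> {w. (0, 0, w) \<in> S.span ?G}" if "w \<in> {w. (0, 0, w) \<in> S.span ?G}" for c w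
        using S.span_scale[of "(0, 0, w)" ?G c] that by (simp add: sum3_scale_def free_scale_zero)
    qed
    have "v \<in> {w. (0, 0, w) \<in> S.span ?G}"
      using v unfolding ISL
    proof (rule L.span_subspace_induct[OF _ sub])
      fix w assume "w \<in> {s2 r v |r v. r \<in> I \<and> v \<in> L}"
      then obtain r u where ru: "r \<in> I" "u \<in> L" "w = s2 r u" by blast
      have eq: "(0, 0, w) = sum3_scale free_scale s2 r (0, 0, u)" using ru by (simp add: sum3_scale_def free_scale_zero)
      have "(0, 0, u) \<in> UNIV \<times> M \<times> L" using ru M0 by simp
      then have "\<exists>r' v'. (0, 0, w) = sum3_scale free_scale s2 r' v' \<and> r' \<in> I \<and> v' \<in> UNIV \<times> M \<times> L"
        using eq ru(1) by blast
      then have "(0, 0, w) \<in> ?G" by (simp only: mem_Collect_eq)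
      then have "(0, 0, w) \<in> S.span ?G" by (rule S.span_base)
      then show "w \<in> {w. (0, 0, w) \<in> S.span ?G}" by (simp only: mem_Collect_eq)
    qed
    then show "(0, 0, v) \<in> ideal_smult (sum3_scale free_scale s2) I (UNIV \<times> M \<times> L)" unfolding IS by simp
  qed
qed


lemma depth_one_regular:
  fixes s :: "'a::comm_ring_1 \<Rightarrow> 'b::ab_group_add \<Rightarrow> 'b"
  assumes mod: "module s" and d: "depth s m N = 1"
  shows "\<exists>y\<in>m. \<forall>v\<in>N. s y v = 0 \<longrightarrow> v = 0"
proof -
  interpret L: module s by (rule mod)
  have "\<exists>xs. regular_seq s m N xs \<and> length xs \<noteq> 0"
  proof (rule ccontr)
    assume "\<not> ?thesis"
    then have "\<forall>y\<in>{enat (length xs) | xs. regular_seq s m N xs}. y \<le> 0" by (auto simp: zero_enat_def)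
    then have "depth s m N \<le> 0" unfolding depth_def by (intro Sup_least) auto
    then show False using d by simp
  qed
  then obtain xs where xs: "regular_seq s m N xs" "length xs \<noteq> 0" by blast
  have "xs ! 0 \<in> set xs" using xs(2) by simp
  then have "xs ! 0 \<in> m" using xs(1) unfolding regular_seq_def by blast
  moreover have "\<forall>v\<in>N. s (xs ! 0) v = 0 \<longrightarrow> v = 0"
  proof (intro ballI impI)
    fix v assume v: "v \<in> N" "s (xs ! 0) v = 0"
    have "ideal_smult s (set (take 0 xs)) N = {0}" by (simp add: ideal_smult_def)
    then show "v = 0" using xs v unfolding regular_seq_def by auto
  qed
  ultimately show ?thesis by blast
qed

lemma syz_subspace:
  fixes sL :: "'a::comm_ring_1 \<Rightarrow> 'b::ab_group_add \<Rightarrow> 'b"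
  assumes mod: "module sL"
  shows "F.subspace (syzygy1 sL g n)"
proof -
  interpret L: module sL by (rule mod)
  show ?thesis
    unfolding syzygy1_def free_carrier_def
  proof (rule F.subspaceI)
    show "0 \<in> {u \<in> {u. \<forall>i\<ge>n. u i = 0}. (\<Sum>i<n. sL (u i) (g i)) = 0}" by simp
    show "u + w \<in> {u \<in> {u. \<forall>i\<ge>n. u i = 0}. (\<Sum>i<n. sL (u i) (g i)) = 0}"
      if "u \<in> {u \<in> {u. \<forall>i\<ge>n. u i = 0}. (\<Sum>i<n. sL (u i) (g i)) = 0}"
         "w \<in> {u \<in> {u. \<forall>i\<ge>n. u i = 0}. (\<Sum>i<n. sL (u i) (g i)) = 0}" for u w
      using that by (simp add: L.scale_left_distrib sum.distrib)
    show "free_scale c u \<in> {u \<in> {u. \<forall>i\<ge>n. u i = 0}. (\<Sum>i<n. sL (u i) (g i)) = 0}"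
      if "u \<in> {u \<in> {u. \<forall>i\<ge>n. u i = 0}. (\<Sum>i<n. sL (u i) (g i)) = 0}" for c u
    proof -
      have "(\<Sum>i<n. sL (c * u i) (g i)) = sL c (\<Sum>i<n. sL (u i) (g i))"
        by (simp add: L.scale_sum_right L.scale_scale)
      then show ?thesis using that by (simp add: free_scale_apply)
    qed
  qed
qed

lemma syz_coeffs:
  fixes sL :: "'a::comm_ring_1 \<Rightarrow> 'b::ab_group_add \<Rightarrow> 'b"
  assumes mod: "module sL" and loc: "local_ring m" and gens: "minimal_generators sL L g n"
    and u: "u \<in> syzygy1 sL g n"
  shows "u i \<in> m"
proof -
  interpret L: module sL by (rule mod)
  have uF: "\<forall>i\<ge>n. u i = 0" and usum: "(\<Sum>i<n. sL (u i) (g i)) = 0"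
    using u unfolding syzygy1_def free_carrier_def by auto
  show ?thesis
  proof (cases "i < n")
    case False
    then show ?thesis using uF ideal_0[OF local_ideal[OF loc]] by simp
  next
    case True
    note j = this
    show ?thesis
    proof (rule ccontr)
      assume "u i \<notin> m"
      then obtain e where e: "1 = u i * e" using local_mem[OF loc] by (metis dvdE)
      let ?R = "{..<n} - {i}"
      have split: "(\<Sum>k<n. sL (u k) (g k)) = sL (u i) (g i) + (\<Sum>k\<in>?R. sL (u k) (g k))"
        using j by (simp add: sum.remove)
      have "sL (u i) (g i) = - (\<Sum>k\<in>?R. sL (u k) (g k))" using split usum by (simp add: eq_neg_iff_add_eq_0)
      then have "g i = - sL e (\<Sum>k\<in>?R. sL (u k) (g k))"
        using e by (metis L.scale_minus_right L.scale_one L.scale_scale mult.commute)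
      moreover have "(\<Sum>k\<in>?R. sL (u k) (g k)) \<in> L.span (g ` ?R)"
        by (intro L.span_sum L.span_scale L.span_base) auto
      ultimately have gi: "g i \<in> L.span (g ` ?R)" using L.span_neg L.span_scale by metis
      have "g ` {..<n} \<subseteq> L.span (g ` ?R)"
      proof
        fix y assume "y \<in> g ` {..<n}"
        then obtain k where "k < n" "y = g k" by blast
        then show "y \<in> L.span (g ` ?R)" using gi by (cases "k = i") (auto intro: L.span_base)
      qed
      then have "L.span (g ` {..<n}) \<subseteq> L.span (g ` ?R)" by (rule L.span_minimal) simp
      moreover have "L.span (g ` ?R) \<subseteq> L.span (g ` {..<n})" by (rule L.span_mono) blast
      ultimately have spR: "L.span (g ` ?R) = L" using gens unfolding minimal_generators_def by blast
      define h where "h k = g (if k < i then k else Suc k)" for k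
      have himg: "h ` {..<n - 1} = g ` ?R"
      proof
        show "h ` {..<n - 1} \<subseteq> g ` ?R" unfolding h_def using j by auto
        show "g ` ?R \<subseteq> h ` {..<n - 1}"
        proof
          fix y assume "y \<in> g ` ?R"
          then obtain k where k: "k < n" "k \<noteq> i" "y = g k" by blast
          show "y \<in> h ` {..<n - 1}"
          proof (cases "k < i")
            case True
            then have "h k = y" unfolding h_def using k by simp
            moreover have "k < n - 1" using True j by simp
            ultimately show ?thesis by blast
          next
            case False
            then have "i < k" using k by simp
            then have "\<not> (k - 1 < i)" "Suc (k - 1) = k" by auto
            then have "h (k - 1) = y" unfolding h_def using k(3) by simp
            moreover have "k - 1 < n - 1" using k \<open>i < k\<close> by simp
            ultimately show ?thesis by blast
          qed
        qed
      qed
      have "\<forall>k<n - 1. h k \<in> L" using gens unfolding minimal_generators_def h_def by auto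
      moreover have "L.span (h ` {..<n - 1}) = L" using himg spR by simp
      ultimately have "n \<le> n - 1" using gens unfolding minimal_generators_def by blast
      then show False using j by simp
    qed
  qed
qed

lemma IS_mono: "module s \<Longrightarrow> I \<subseteq> I' \<Longrightarrow> ideal_smult s I N \<subseteq> ideal_smult s I' N"
  unfolding ideal_smult_def by (intro module.span_mono) blast+

lemma IS_gen: "module s \<Longrightarrow> r \<in> I \<Longrightarrow> v \<in> N \<Longrightarrow> s r v \<in> ideal_smult s I N"
  unfolding ideal_smult_def by (rule module.span_base) blast+

lemma IS_zero: "module s \<Longrightarrow> 0 \<in> ideal_smult s I N"
  unfolding ideal_smult_def by (rule module.span_zero)

lemma IS_sub_image:
  assumes mod: "module s" and L: "module.subspace s L" and I: "I \<subseteq> pr z"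
  shows "ideal_smult s I L \<subseteq> (\<lambda>v. s z v) ` L"
proof -
  interpret L: module s by (rule mod)
  show ?thesis unfolding ideal_smult_def
  proof (rule L.span_minimal)
    show "L.subspace ((\<lambda>v. s z v) ` L)" by (rule L.subspace_image_scale[OF L])
    show "{s r v |r v. r \<in> I \<and> v \<in> L} \<subseteq> (\<lambda>v. s z v) ` L"
    proof
      fix w assume "w \<in> {s r v |r v. r \<in> I \<and> v \<in> L}"
      then obtain r v where rv: "r \<in> I" "v \<in> L" "w = s r v" by blast
      then obtain t where "r = z * t" using I unfolding pr_def by blast
      then have "w = s z (s t v)" using rv by (simp add: L.scale_scale)
      moreover have "s t v \<in> L" using L.subspace_scale[OF L rv(2)] .
      ultimately show "w \<in> (\<lambda>v. s z v) ` L" by blast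
    qed
  qed
qed

lemma module_R: "module ((*) :: 'a::comm_ring_1 \<Rightarrow> 'a \<Rightarrow> 'a)"
  by standard (auto simp: algebra_simps)

theorem lemma4p8:
  fixes m :: "'a::comm_ring_1 set"
    and sL :: "'a \<Rightarrow> 'b::ab_group_add \<Rightarrow> 'b"
    and L :: "'b set"
    and g :: "nat \<Rightarrow> 'b" and n :: nat and x :: 'a
  assumes CM: "cohen_macaulay_local m"
    and dim1: "krull_dim TYPE('a) = 1"
    and modL: "module sL"
    and MCM: "max_CM_module sL m L"
    and nonfree: "\<not> free_module sL L"
    and gens: "minimal_generators sL L g n"
    and sup: "superficial (sum3_scale free_scale sL) m
                 (UNIV \<times> syzygy1 sL g n \<times> L) x"
  shows "ideal_smult free_scale (ideal_pow m (multiplicity m - 1)) (syzygy1 sL g n)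
           \<subseteq> free_scale x ` syzygy1 sL g n"
proof -
  interpret L: module sL by (rule modL)
  have noeth: "noetherian_ring TYPE('a)" and loc: "local_ring m"
    and depA: "depth (*) m (UNIV :: 'a set) = 1"
    using CM dim1 unfolding cohen_macaulay_local_def by auto
  have Lsub: "L.subspace L" and depL: "depth sL m L = 1"
    using MCM dim1 unfolding max_CM_module_def fin_gen_module_def by auto
  obtain B0 where B0: "finite B0" "L.span B0 = L"
    using MCM unfolding max_CM_module_def fin_gen_module_def by blast
  obtain y where y: "y \<in> m" and yreg0: "\<forall>v\<in>UNIV. y * v = 0 \<longrightarrow> v = 0"
    using depth_one_regular[OF module_R depA] by blast
  have yreg: "\<forall>v. y * v = 0 \<longrightarrow> v = 0" using yreg0 by blast
  obtain y' where y': "y' \<in> m" and y'reg: "\<forall>v\<in>L. sL y' v = 0 \<longrightarrow> v = 0"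
    using depth_one_regular[OF modL depL] by blast
  define M where "M = syzygy1 sL g n"
  have Msub: "F.subspace M" unfolding M_def by (rule syz_subspace[OF modL])
  have M0: "0 \<in> M" using F.subspace_0[OF Msub] .
  have L0: "0 \<in> L" using L.subspace_0[OF Lsub] .
  let ?S = "sum3_scale free_scale sL"
  let ?N3 = "UNIV \<times> M \<times> L"
  have x: "x \<in> m" using sup unfolding superficial_def by blast
  obtain c where c: "c > 0" and supeq: "\<And>k. k > c \<Longrightarrow>
      {v \<in> ?N3. ?S x v \<in> ideal_smult ?S (ideal_pow m k) ?N3} \<inter> ideal_smult ?S (ideal_pow m c) ?N3
        = ideal_smult ?S (ideal_pow m (k - 1)) ?N3"
    using sup unfolding superficial_def M_def by blast
  note dec1 = IS3_decomp(1)[OF modL Msub Lsub ideal_pow_ideal]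
  note dec3 = IS3_decomp(2)[OF modL Msub Lsub ideal_pow_ideal]
  have Sa: "?S x (a, 0, 0) = (x * a, 0, 0)" for a by (simp add: sum3_scale_def free_scale_zero)
  have Sv: "?S x (0, 0, v) = (0, 0, sL x v)" for v by (simp add: sum3_scale_def free_scale_zero)
  have supA: "\<forall>k>c. {a. x * a \<in> ideal_pow m k} \<inter> ideal_pow m c = ideal_pow m (k - 1)"
  proof (intro allI impI)
    fix k assume k: "k > c"
    show "{a. x * a \<in> ideal_pow m k} \<inter> ideal_pow m c = ideal_pow m (k - 1)"
    proof (intro set_eqI)
      fix a
      have "a \<in> {a. x * a \<in> ideal_pow m k} \<inter> ideal_pow m c \<longleftrightarrow>
          (a, 0, 0) \<in> {v \<in> ?N3. ?S x v \<in> ideal_smult ?S (ideal_pow m k) ?N3} \<inter> ideal_smult ?S (ideal_pow m c) ?N3"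
        using M0 L0 by (simp add: Sa dec1)
      also have "\<dots> \<longleftrightarrow> a \<in> ideal_pow m (k - 1)" unfolding supeq[OF k] by (rule dec1)
      finally show "a \<in> {a. x * a \<in> ideal_pow m k} \<inter> ideal_pow m c \<longleftrightarrow> a \<in> ideal_pow m (k - 1)" .
    qed
  qed
  have supL: "v \<in> ideal_smult sL (ideal_pow m (k - 1)) L"
    if k: "k > c" and v: "v \<in> L" "sL x v \<in> ideal_smult sL (ideal_pow m k) L" "v \<in> ideal_smult sL (ideal_pow m c) L" for k v
  proof -
    have "(0, 0, v) \<in> {v \<in> ?N3. ?S x v \<in> ideal_smult ?S (ideal_pow m k) ?N3} \<inter> ideal_smult ?S (ideal_pow m c) ?N3"
      using M0 v by (simp add: Sv dec3)
    then have "(0, 0, v) \<in> ideal_smult ?S (ideal_pow m (k - 1)) ?N3" unfolding supeq[OF k] .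
    then show ?thesis using dec3 by blast
  qed
  obtain sy where sy: "ideal_pow m sy \<subseteq> pr y" using power_in_pr[OF loc noeth dim1 y yreg] by blast
  have regA: "\<forall>v. x * v = 0 \<longrightarrow> v = 0"
  proof (intro allI impI)
    fix a assume xa: "x * a = 0"
    define w where "w = y ^ c * a"
    have wc: "w \<in> ideal_pow m c" unfolding w_def by (rule ideal_multR[OF ideal_pow_ideal ideal_pow_power[OF y]])
    have "x * w = y ^ c * (x * a)" unfolding w_def by (rule mult.left_commute)
    then have xw: "x * w = 0" using xa by simp
    have "w \<in> pr (y ^ k)" for k
    proof -
      have mem: "w \<in> {a. x * a \<in> ideal_pow m (sy * k + c + 1)} \<inter> ideal_pow m c"
        using xw wc ideal_0[OF ideal_pow_ideal] by simp
      have eq: "{a. x * a \<in> ideal_pow m (sy * k + c + 1)} \<inter> ideal_pow m c = ideal_pow m (sy * k + c + 1 - 1)"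
        by (rule supA[rule_format]) simp
      have "w \<in> ideal_pow m (sy * k + c + 1 - 1)" using mem unfolding eq .
      then have "w \<in> ideal_pow m (sy * k + c)" by simp
      then have "w \<in> ideal_pow m (sy * k)" using ideal_pow_anti[of "sy * k" "sy * k + c" m] by auto
      then show ?thesis using pow_mult_pr[OF sy] by blast
    qed
    moreover have "pr (y ^ k) = (\<lambda>v. y ^ k * v) ` R.span {1}" for k
      unfolding pr_def R.span_singleton by auto
    ultimately have "w \<in> (\<Inter>k. (\<lambda>v. y ^ k * v) ` R.span {1})" by auto
    then have "w = 0" using R.krull_int[OF noeth loc y, of "{1}"] by simp
    then show "a = 0" unfolding w_def using reg_pow[OF yreg] by blast
  qed
  obtain sx where sx: "ideal_pow m sx \<subseteq> pr x" using power_in_pr[OF loc noeth dim1 x regA] by blast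
  have y'pow: "v = 0" if "v \<in> L" "sL (y' ^ k) v = 0" for k v
    using that
  proof (induction k arbitrary: v)
    case 0 then show ?case by simp
  next
    case (Suc k)
    have "sL (y' ^ k) (sL y' v) = sL (y' ^ Suc k) v" by (simp only: L.scale_scale power_Suc2)
    then have "sL (y' ^ k) (sL y' v) = 0" using Suc.prems by simp
    moreover have "sL y' v \<in> L" using L.subspace_scale[OF Lsub Suc.prems(1)] .
    ultimately have "sL y' v = 0" using Suc.IH by blast
    then show ?case using y'reg Suc.prems(1) by blast
  qed
  have regL: "\<forall>v\<in>L. sL x v = 0 \<longrightarrow> v = 0"
  proof (intro ballI impI)
    fix v assume v: "v \<in> L" and xv: "sL x v = 0"
    define w where "w = sL (y' ^ c) v"
    have wL: "w \<in> L" unfolding w_def using L.subspace_scale[OF Lsub v] .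
    have wc: "w \<in> ideal_smult sL (ideal_pow m c) L"
      unfolding w_def by (rule IS_gen[OF modL ideal_pow_power[OF y'] v])
    have "sL x w = sL (y' ^ c) (sL x v)" unfolding w_def by (rule L.scale_left_commute)
    then have xw: "sL x w = 0" using xv by simp
    have "w \<in> (\<lambda>v. sL (x ^ k) v) ` L" for k
    proof -
      have "w \<in> ideal_smult sL (ideal_pow m (sx * k + c + 1 - 1)) L"
        using supL[of "sx * k + c + 1" w] wL wc xw IS_zero[OF modL] by simp
      then have "w \<in> ideal_smult sL (ideal_pow m (sx * k)) L"
        using IS_mono[OF modL ideal_pow_anti[of "sx * k" "sx * k + c" m]] by auto
      then show ?thesis using IS_sub_image[OF modL Lsub pow_mult_pr[OF sx, of k]] by blast
    qed
    then have "w \<in> (\<Inter>k. (\<lambda>v. sL (x ^ k) v) ` L.span B0)" using B0(2) by auto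
    then have "w = 0" using L.krull_int[OF noeth loc x B0(1)] by simp
    then show "v = 0" using y'pow[OF v] unfolding w_def by blast
  qed
  have col: "{a. x * a \<in> ideal_pow m k} = ideal_pow m (k - 1)" if "sx + c + 1 \<le> k" for k
    by (rule colon_eq[OF x regA sx supA that])
  obtain l where l: "module_length (*) (pr x) UNIV = enat l" and ml: "multiplicity m = l"
    using mult_eq[OF loc noeth dim1 regA sx _ _ col, of "sx + c + 1"] by auto
  have ml_pr: "ideal_pow m l \<subseteq> pr x" by (rule pow_in_pr_len[OF l sx])
  have l1: "l \<ge> 1"
  proof (rule ccontr)
    assume "\<not> l \<ge> 1"
    then have "l = 0" by simp
    then have "1 \<in> pr x" using ml_pr by auto
    then obtain r where "1 = x * r" unfolding pr_def by blast
    then have "x dvd 1" by (metis dvdI)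
    then show False using x local_mem[OF loc] by blast
  qed
  define T where "T = {u \<in> M. \<forall>i. u i \<in> ideal_pow m l}"
  have Tsub: "F.subspace T" unfolding T_def
  proof (rule F.subspaceI)
    show "0 \<in> {u \<in> M. \<forall>i. u i \<in> ideal_pow m l}" using M0 ideal_0[OF ideal_pow_ideal] by simp
    show "u + w \<in> {u \<in> M. \<forall>i. u i \<in> ideal_pow m l}"
      if "u \<in> {u \<in> M. \<forall>i. u i \<in> ideal_pow m l}" "w \<in> {u \<in> M. \<forall>i. u i \<in> ideal_pow m l}" for u w
      using that F.subspace_add[OF Msub] ideal_add[OF ideal_pow_ideal, of _ m l] by auto
    show "free_scale r u \<in> {u \<in> M. \<forall>i. u i \<in> ideal_pow m l}"
      if "u \<in> {u \<in> M. \<forall>i. u i \<in> ideal_pow m l}" for r u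
      using that F.subspace_scale[OF Msub] ideal_multL[OF ideal_pow_ideal, of _ m l] by (auto simp: free_scale_apply)
  qed
  have "ideal_smult free_scale (ideal_pow m (l - 1)) M \<subseteq> T"
    unfolding ideal_smult_def
  proof (rule F.span_minimal[OF _ Tsub])
    show "{free_scale r v |r v. r \<in> ideal_pow m (l - 1) \<and> v \<in> M} \<subseteq> T"
    proof
      fix z assume "z \<in> {free_scale r v |r v. r \<in> ideal_pow m (l - 1) \<and> v \<in> M}"
      then obtain r u where ru: "r \<in> ideal_pow m (l - 1)" "u \<in> M" "z = free_scale r u" by blast
      have "z \<in> M" using ru F.subspace_scale[OF Msub] by simp
      moreover have "z i \<in> ideal_pow m l" for i
      proof -
        have "u i \<in> m" using syz_coeffs[OF modL loc gens] ru(2) unfolding M_def by blast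
        then have "u i * r \<in> ideal_pow m (Suc (l - 1))" by (rule ideal_pow_mult[OF _ ru(1)])
        then show ?thesis using l1 ru(3) by (simp add: free_scale_apply mult.commute)
      qed
      ultimately show "z \<in> T" unfolding T_def by blast
    qed
  qed
  moreover have "T \<subseteq> free_scale x ` M"
  proof
    fix z assume z: "z \<in> T"
    have "\<forall>i. \<exists>w. z i = x * w" using z ml_pr unfolding T_def pr_def by blast
    then obtain W where W: "\<And>i. z i = x * W i" by metis
    define w where "w i = (if i < n then W i else 0)" for i
    have zM: "z \<in> M" using z unfolding T_def by blast
    then have z0: "\<forall>i\<ge>n. z i = 0" and zs: "(\<Sum>i<n. sL (z i) (g i)) = 0"
      unfolding M_def syzygy1_def free_carrier_def by auto
    have zw: "z = free_scale x w"
      unfolding free_scale_def w_def fun_eq_iff using W z0 by auto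
    define \<sigma> where "\<sigma> = (\<Sum>i<n. sL (w i) (g i))"
    have gL: "g i \<in> L" if "i < n" for i using gens that unfolding minimal_generators_def by blast
    have \<sigma>L: "\<sigma> \<in> L" unfolding \<sigma>_def using gL by (intro L.subspace_sum[OF Lsub] L.subspace_scale[OF Lsub]) auto
    have "sL x \<sigma> = (\<Sum>i<n. sL (z i) (g i))"
      unfolding \<sigma>_def L.scale_sum_right zw by (simp add: L.scale_scale free_scale_apply)
    then have "\<sigma> = 0" using regL \<sigma>L zs by simp
    moreover have "w \<in> free_carrier n" unfolding free_carrier_def w_def by simp
    ultimately have "w \<in> M" unfolding M_def syzygy1_def \<sigma>_def by simp
    then show "z \<in> free_scale x ` M" using zw by blast
  qed
  ultimately show ?thesis using ml unfolding M_def by simp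
qed

end
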